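(* Let $p>0$ be an integer and let $E_p$ be the Eschenburg space $E_{\bar a,\bar b}$ with $\bar a=(1,1,p)$, $\bar b=(0,0,p+2)$. Let $\mathrm{G}=\mathrm{SU}(2)\times\mathrm{SU}(2)$ act on $E_p$ by $(g_1,g_2)\cdot[A]=[\iota(g_1)\,A\,\iota(g_2)^{-1}]$, where $\iota:\mathrm{SU}(2)\to\mathrm{SU}(3)$ is the upper-left $2\times2$ block embedding. This action has cohomogeneity one, with principal isotropy group $\mathrm{H}=\{((\pm\mathrm{id})^{p+1},(\pm\mathrm{id})^{p})\}\cong\mathbb{Z}_2$ (same sign in both entries) and singular isotropy groups $\mathrm{K}^-=\Delta\mathrm{SU}(2)\cdot\mathrm{H}$ and $\mathrm{K}^+=\{(\mathrm{diag}(z^{p+1},\bar z^{p+1}),\mathrm{diag}(z^{p},\bar z^{p})):|z|=1\}$, a circle of slope $(p+1,p)$ in a maximal torus of $\mathrm{SU}(2)\times\mathrm{SU}(2)$.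
   Context: $E_{\bar a,\bar b}$ is the quotient of $\mathrm{SU}(3)$ by the free circle action $z\cdot A=\mathrm{diag}(z^{a_1},z^{a_2},z^{a_3})A\,\mathrm{diag}(z^{b_1},z^{b_2},z^{b_3})^{-1}$, equipped with the Eschenburg metric (submersion metric from the left-invariant, $\mathrm{Ad}(\mathrm{U}(2))$-invariant metric on $\mathrm{SU}(3)$ obtained by scaling the bi-invariant metric by a fixed $t\in(0,1)$ on the Lie algebra of the upper-left block $\mathrm{U}(2)$). For a cohomogeneity one action with orbit space an interval, the group diagram $\mathrm{H}\subset\{\mathrm{K}^-,\mathrm{K}^+\}\subset\mathrm{G}$ consists of the isotropy groups along a minimal geodesic between the two non-principal orbits: $\mathrm{K}^\pm$ at the endpoints and $\mathrm{H}$ at interior points. $\Delta\mathrm{SU}(2)$ is the diagonal subgroup. *)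

theory Defs
  imports "HOL-Analysis.Analysis"
begin

definition adj :: "complex^'n^'n \<Rightarrow> complex^'n^'n" where
  "adj U = (\<chi> i j. cnj (U $ j $ i))"

definition SU :: "(complex^'n^'n) set" where
  "SU = {U. U ** adj U = mat 1 \<and> det U = 1}"

definition S1 :: "complex set" where
  "S1 = {z. cmod z = 1}"

definition diag3 :: "complex \<Rightarrow> complex \<Rightarrow> complex \<Rightarrow> complex^3^3" where
  "diag3 a b c = (\<chi> i j. if i = j then (if i = 1 then a else if i = 2 then b else c) else 0)"

definition diag2 :: "complex \<Rightarrow> complex \<Rightarrow> complex^2^2" where
  "diag2 a b = (\<chi> i j. if i = j then (if i = 1 then a else b) else 0)"

definition emb :: "complex^2^2 \<Rightarrow> complex^3^3" where
  "emb g = (\<chi> i j. if i = 3 \<or> j = 3 then (if i = j then 1 else 0)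
                   else g $ (if i = 1 then (1::2) else 2) $ (if j = 1 then (1::2) else 2))"

definition circ_act :: "int \<times> int \<times> int \<Rightarrow> int \<times> int \<times> int \<Rightarrow> complex \<Rightarrow> complex^3^3 \<Rightarrow> complex^3^3" where
  "circ_act a b z A =
     diag3 (z powi fst a) (z powi fst (snd a)) (z powi snd (snd a)) ** A **
     diag3 (z powi (- fst b)) (z powi (- fst (snd b))) (z powi (- snd (snd b)))"

text \<open>Squared norm of X in su(3) for the Eschenburg metric: the bi-invariant metric
  -Re tr(XY) (so |X|^2 = sum |X_ij|^2), scaled by t on the Lie algebra u(2) of the
  upper-left block U(2) (entries with i,j both in the block or i=j=3), unchanged on
  its orthogonal complement (entries (i,3),(3,i), i=1,2).\<close>
definition esch_sqnorm :: "real \<Rightarrow> complex^3^3 \<Rightarrow> real" where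
  "esch_sqnorm t X = (\<Sum>i\<in>UNIV. \<Sum>j\<in>UNIV. (if (i = 3) \<noteq> (j = 3) then 1 else t) * (cmod (X $ i $ j))\<^sup>2)"

text \<open>Length of a curve for the left-invariant metric: |gamma'| = |gamma^(-1) gamma'|_e.\<close>
definition curve_length :: "real \<Rightarrow> (real \<Rightarrow> complex^3^3) \<Rightarrow> real" where
  "curve_length t \<gamma> = integral {0..1}
     (\<lambda>s. sqrt (esch_sqnorm t (adj (\<gamma> s) ** vector_derivative \<gamma> (at s within {0..1}))))"

definition su3_dist :: "real \<Rightarrow> complex^3^3 \<Rightarrow> complex^3^3 \<Rightarrow> real" where
  "su3_dist t A B = Inf {curve_length t \<gamma> | \<gamma>. \<gamma> C1_differentiable_on {0..1} \<and>
      (\<forall>s\<in>{0..1}. \<gamma> s \<in> SU) \<and> \<gamma> 0 = A \<and> \<gamma> 1 = B}"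

text \<open>Distance in E_{a,b} between the classes [A], [B] for the submersion metric
  (the circle acts isometrically, so this is the infimum over the fibre).\<close>
definition esch_dist :: "int \<times> int \<times> int \<Rightarrow> int \<times> int \<times> int \<Rightarrow> real \<Rightarrow> complex^3^3 \<Rightarrow> complex^3^3 \<Rightarrow> real" where
  "esch_dist a b t A B = Inf {su3_dist t A (circ_act a b z B) | z. z \<in> S1}"

definition Gact :: "(complex^2^2) \<times> (complex^2^2) \<Rightarrow> complex^3^3 \<Rightarrow> complex^3^3" where
  "Gact g A = emb (fst g) ** A ** emb (adj (snd g))"

definition same_Gorbit :: "int \<times> int \<times> int \<Rightarrow> int \<times> int \<times> int \<Rightarrow> complex^3^3 \<Rightarrow> complex^3^3 \<Rightarrow> bool" where
  "same_Gorbit a b A B \<longleftrightarrow> (\<exists>g\<in>SU \<times> SU. \<exists>z\<in>S1. B = circ_act a b z (Gact g A))"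

definition isotropy :: "int \<times> int \<times> int \<Rightarrow> int \<times> int \<times> int \<Rightarrow> complex^3^3 \<Rightarrow> ((complex^2^2) \<times> (complex^2^2)) set" where
  "isotropy a b A = {g \<in> SU \<times> SU. \<exists>z\<in>S1. Gact g A = circ_act a b z A}"

definition a_p :: "nat \<Rightarrow> int \<times> int \<times> int" where "a_p p = (1, 1, int p)"
definition b_p :: "nat \<Rightarrow> int \<times> int \<times> int" where "b_p p = (0, 0, int p + 2)"

definition H_p :: "nat \<Rightarrow> ((complex^2^2) \<times> (complex^2^2)) set" where
  "H_p p = {(mat (e ^ (p + 1)), mat (e ^ p)) | e. e = 1 \<or> e = -1}"

definition Kminus_p :: "nat \<Rightarrow> ((complex^2^2) \<times> (complex^2^2)) set" where
  "Kminus_p p = {(g ** fst h, g ** snd h) | g h. g \<in> SU \<and> h \<in> H_p p}"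

definition Kplus_p :: "nat \<Rightarrow> ((complex^2^2) \<times> (complex^2^2)) set" where
  "Kplus_p p = {(diag2 (z ^ (p + 1)) (cnj z ^ (p + 1)), diag2 (z ^ p) (cnj z ^ p)) | z. z \<in> S1}"

end

theory Submission
  imports Defs
begin

lemma adj_nth[simp]: "adj U $ i $ j = cnj (U $ j $ i)"
  by (simp add: adj_def)
lemma adj_mult: "adj ((A::complex^'n^'n) ** B) = adj B ** adj A"
  by (simp add: vec_eq_iff matrix_matrix_mult_def mult.commute)
lemma SU_D: "U \<in> SU \<Longrightarrow> U ** adj U = mat 1" "U \<in> SU \<Longrightarrow> det U = 1"
  by (auto simp: SU_def)
lemma SU_inv: "U \<in> SU \<Longrightarrow> adj U ** U = mat 1"
  using matrix_left_right_inverse SU_D by blast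
lemma adj_adj[simp]: "adj (adj U) = U"
  by (simp add: vec_eq_iff)
lemma adj_mat1[simp]: "adj (mat 1 :: complex^'n^'n) = mat 1"
  by (simp add: vec_eq_iff mat_def)
lemma SU_one: "mat 1 \<in> SU"
  by (simp add: SU_def)
lemma SU_mult: "A \<in> SU \<Longrightarrow> B \<in> SU \<Longrightarrow> A ** B \<in> SU"
proof -
  assume a: "A \<in> SU" and b: "B \<in> SU"
  have "A ** B ** adj (A ** B) = A ** (B ** adj B) ** adj A"
    by (simp only: adj_mult matrix_mul_assoc)
  also have "\<dots> = mat 1" using a b by (simp only: SU_D matrix_mul_rid)
  moreover have "det (A ** B) = 1" using a b by (simp add: det_mul SU_D)
  ultimately show ?thesis unfolding SU_def by simp
qed
lemma SU_adj: "U \<in> SU \<Longrightarrow> adj U \<in> SU"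
proof -
  assume u: "U \<in> SU"
  have "det (adj U ** U) = 1" using SU_inv[OF u] by simp
  then have "det (adj U) = 1" using SU_D(2)[OF u] by (simp add: det_mul)
  moreover have "adj U ** adj (adj U) = mat 1" using SU_inv[OF u] by simp
  ultimately show ?thesis unfolding SU_def by simp
qed
lemma mm3: "((A::'a::semiring_1^3^3) ** B) $ i $ j = A$i$1*B$1$j + A$i$2*B$2$j + A$i$3*B$3$j"
  by (simp add: matrix_matrix_mult_def sum_3)
lemma mm2: "((A::'a::semiring_1^2^2) ** B) $ i $ j = A$i$1*B$1$j + A$i$2*B$2$j"
  by (simp add: matrix_matrix_mult_def sum_2)
lemma mat3_eq_iff: "(A::'a^3^3) = B \<longleftrightarrow>
  A$1$1 = B$1$1 \<and> A$1$2 = B$1$2 \<and> A$1$3 = B$1$3 \<and>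
  A$2$1 = B$2$1 \<and> A$2$2 = B$2$2 \<and> A$2$3 = B$2$3 \<and>
  A$3$1 = B$3$1 \<and> A$3$2 = B$3$2 \<and> A$3$3 = B$3$3"
  unfolding vec_eq_iff forall_3 by (simp only: conj_assoc)
lemma mat2_eq_iff: "(A::'a^2^2) = B \<longleftrightarrow>
  A$1$1 = B$1$1 \<and> A$1$2 = B$1$2 \<and> A$2$1 = B$2$1 \<and> A$2$2 = B$2$2"
  by (auto simp add: vec_eq_iff forall_2)
lemma SU2_form:
  assumes "(g::complex^2^2) \<in> SU"
  shows "g$2$2 = cnj (g$1$1)" "g$1$2 = - cnj (g$2$1)"
proof -
  define K :: "complex^2^2" where "K = (\<chi> i j. if i = 1 then (if j = 1 then g$2$2 else - g$1$2)
      else (if j = 1 then - g$2$1 else g$1$1))"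
  have "K ** g = mat (det g)"
    unfolding mat2_eq_iff mm2 K_def mat_def det_2 by (simp; algebra)
  then have "K ** g = mat 1" using SU_D(2)[OF assms] by simp
  then have "adj g = K" using SU_D(1)[OF assms]
    by (metis matrix_mul_assoc matrix_mul_lid matrix_mul_rid)
  then show "g$2$2 = cnj (g$1$1)" "g$1$2 = - cnj (g$2$1)"
    by (auto simp: mat2_eq_iff K_def)
qed

lemma SU3_cof:
  assumes "(U::complex^3^3) \<in> SU"
  shows "cnj (U$1$1) = U$2$2*U$3$3 - U$2$3*U$3$2"
    "cnj (U$1$2) = U$2$3*U$3$1 - U$2$1*U$3$3"
    "cnj (U$2$1) = U$1$3*U$3$2 - U$1$2*U$3$3"
    "cnj (U$2$2) = U$1$1*U$3$3 - U$1$3*U$3$1"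
proof -
  define K :: "complex^3^3" where "K = (\<chi> i j.
    if i = 1 then (if j = 1 then U$2$2*U$3$3 - U$2$3*U$3$2 else if j = 2 then U$1$3*U$3$2 - U$1$2*U$3$3 else U$1$2*U$2$3 - U$1$3*U$2$2)
    else if i = 2 then (if j = 1 then U$2$3*U$3$1 - U$2$1*U$3$3 else if j = 2 then U$1$1*U$3$3 - U$1$3*U$3$1 else U$1$3*U$2$1 - U$1$1*U$2$3)
    else (if j = 1 then U$2$1*U$3$2 - U$2$2*U$3$1 else if j = 2 then U$1$2*U$3$1 - U$1$1*U$3$2 else U$1$1*U$2$2 - U$1$2*U$2$1))"
  have "K ** U = mat (det U)"
    unfolding mat3_eq_iff mm3 K_def mat_def det_3 by (simp; algebra)
  then have "K ** U = mat 1" using SU_D(2)[OF assms] by simp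
  then have "adj U = K" using SU_D(1)[OF assms]
    by (metis matrix_mul_assoc matrix_mul_lid matrix_mul_rid)
  then show "cnj (U$1$1) = U$2$2*U$3$3 - U$2$3*U$3$2"
    "cnj (U$1$2) = U$2$3*U$3$1 - U$2$1*U$3$3"
    "cnj (U$2$1) = U$1$3*U$3$2 - U$1$2*U$3$3"
    "cnj (U$2$2) = U$1$1*U$3$3 - U$1$3*U$3$1"
    by (auto simp: mat3_eq_iff K_def)
qed

definition rot :: "real \<Rightarrow> complex^3^3" where
 "rot th = (\<chi> i j. if i = 1 then (if j = 1 then 1 else 0)
    else if i = 2 then (if j = 1 then 0 else if j = 2 then of_real (cos th) else - of_real (sin th))
    else (if j = 1 then 0 else if j = 2 then of_real (sin th) else of_real (cos th)))"

lemma rot_nth[simp]: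
  "rot th $ 1 $ 1 = 1" "rot th $ 1 $ 2 = 0" "rot th $ 1 $ 3 = 0"
  "rot th $ 2 $ 1 = 0" "rot th $ 2 $ 2 = of_real (cos th)" "rot th $ 2 $ 3 = - of_real (sin th)"
  "rot th $ 3 $ 1 = 0" "rot th $ 3 $ 2 = of_real (sin th)" "rot th $ 3 $ 3 = of_real (cos th)"
  by (simp_all add: rot_def)

lemma emb_nth[simp]:
  "emb g $ 1 $ 1 = g$1$1" "emb g $ 1 $ 2 = g$1$2" "emb g $ 1 $ 3 = 0"
  "emb g $ 2 $ 1 = g$2$1" "emb g $ 2 $ 2 = g$2$2" "emb g $ 2 $ 3 = 0"
  "emb g $ 3 $ 1 = 0" "emb g $ 3 $ 2 = 0" "emb g $ 3 $ 3 = 1"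
  by (simp_all add: emb_def)

lemma diag3_nth[simp]:
  "diag3 a b c $ 1 $ 1 = a" "diag3 a b c $ 1 $ 2 = 0" "diag3 a b c $ 1 $ 3 = 0"
  "diag3 a b c $ 2 $ 1 = 0" "diag3 a b c $ 2 $ 2 = b" "diag3 a b c $ 2 $ 3 = 0"
  "diag3 a b c $ 3 $ 1 = 0" "diag3 a b c $ 3 $ 2 = 0" "diag3 a b c $ 3 $ 3 = c"
  by (simp_all add: diag3_def)

lemma diag2_nth[simp]:
  "diag2 a b $ 1 $ 1 = a" "diag2 a b $ 1 $ 2 = 0" "diag2 a b $ 2 $ 1 = 0" "diag2 a b $ 2 $ 2 = b"
  by (simp_all add: diag2_def)

lemma mat_nth3[simp]:
  "(mat c :: 'a::zero^3^3) $ 1 $ 1 = c" "(mat c :: 'a^3^3) $ 1 $ 2 = 0" "(mat c :: 'a^3^3) $ 1 $ 3 = 0"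
  "(mat c :: 'a^3^3) $ 2 $ 1 = 0" "(mat c :: 'a^3^3) $ 2 $ 2 = c" "(mat c :: 'a^3^3) $ 2 $ 3 = 0"
  "(mat c :: 'a^3^3) $ 3 $ 1 = 0" "(mat c :: 'a^3^3) $ 3 $ 2 = 0" "(mat c :: 'a^3^3) $ 3 $ 3 = c"
  by (simp_all add: mat_def)

lemma mat_nth2[simp]:
  "(mat c :: 'a::zero^2^2) $ 1 $ 1 = c" "(mat c :: 'a^2^2) $ 1 $ 2 = 0"
  "(mat c :: 'a^2^2) $ 2 $ 1 = 0" "(mat c :: 'a^2^2) $ 2 $ 2 = c"
  by (simp_all add: mat_def)

definition cfac :: "nat \<Rightarrow> complex \<Rightarrow> 3 \<Rightarrow> 3 \<Rightarrow> complex" where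
  "cfac p z i j = (if i = 3 then z ^ p else z) * (if j = 3 then inverse z ^ (p + 2) else 1)"

lemma circ_nth: "circ_act (a_p p) (b_p p) z A $ i $ j = cfac p z i j * A $ i $ j"
proof -
  have e: "circ_act (a_p p) (b_p p) z A = diag3 z z (z ^ p) ** A ** diag3 1 1 (inverse z ^ (p + 2))"
  proof -
    have "z powi (- (int p + 2)) = inverse z ^ (p + 2)"
      by (metis of_nat_add of_nat_numeral power_int_minus power_int_of_nat power_inverse)
    then show ?thesis unfolding circ_act_def a_p_def b_p_def by simp
  qed
  show ?thesis unfolding e cfac_def
    using exhaust_3[of i] exhaust_3[of j] by (elim disjE) (simp_all add: mm3)
qed

lemma rot0: "rot 0 = mat 1"
  by (simp add: mat3_eq_iff)

lemma S1_mult_cnj: "z \<in> S1 \<Longrightarrow> z * cnj z = 1"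
  unfolding S1_def by (simp flip: complex_norm_square)

lemma S1_inv: "z \<in> S1 \<Longrightarrow> inverse z = cnj z" "z \<in> S1 \<Longrightarrow> z \<noteq> 0"
  using S1_mult_cnj inverse_unique apply blast
  unfolding S1_def by auto

lemma emb_mult: "emb X ** emb Y = emb (X ** Y)"
  by (simp add: mat3_eq_iff mm3 mm2)

lemma pm1_pow: "(e::complex) = 1 \<or> e = -1 \<Longrightarrow> e ^ n = 1 \<or> e ^ n = -1"
  by (cases "even n") (auto simp: minus_one_power_iff)

lemma pm1_facts: assumes "(e::complex) = 1 \<or> e = -1"
  shows "inverse e = e" "cnj e = e" "e * e = 1"
  using assms by auto

lemma mat_pm_SU: assumes "(c::complex) = 1 \<or> c = -1" shows "(mat c :: complex^2^2) \<in> SU"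
proof -
  have "(mat c :: complex^2^2) ** adj (mat c) = mat 1" using assms
    by (auto simp: mat2_eq_iff mm2)
  moreover have "det (mat c :: complex^2^2) = 1" using assms by (auto simp: det_2)
  ultimately show ?thesis unfolding SU_def by simp
qed

lemma H_SU: "h \<in> H_p p \<Longrightarrow> fst h \<in> SU \<and> snd h \<in> SU"
  unfolding H_p_def by (auto intro!: mat_pm_SU simp: minus_one_power_iff)

lemma SU_entries2: assumes "(g::complex^2^2) \<in> SU"
  shows "g$1$1 * cnj (g$1$1) + g$1$2 * cnj (g$1$2) = 1"
    "g$2$1 * cnj (g$2$1) + g$2$2 * cnj (g$2$2) = 1"
    "g$1$1 * cnj (g$2$1) + g$1$2 * cnj (g$2$2) = 0"
    "g$2$1 * cnj (g$1$1) + g$2$2 * cnj (g$1$2) = 0"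
  using SU_D(1)[OF assms] unfolding mat2_eq_iff mm2 by simp_all

lemma mat_mat2: "(mat a :: 'a::comm_ring_1^2^2) ** mat b = mat (a * b)"
  by (simp add: mat2_eq_iff mm2)
lemma mat_comm2: "(g :: 'a::comm_ring_1^2^2) ** mat c = mat c ** g"
  by (simp add: mat2_eq_iff mm2 mult.commute)
lemma adj_mat2: "adj (mat c :: complex^2^2) = mat (cnj c)"
  by (simp add: mat2_eq_iff)

lemma iso_Kminus: "isotropy (a_p p) (b_p p) (mat 1) = Kminus_p p"
proof (intro set_eqI iffI)
  fix g assume "g \<in> isotropy (a_p p) (b_p p) (mat 1)"
  then obtain g1 g2 z where g: "g = (g1,g2)" "g1 \<in> SU" "g2 \<in> SU" "z \<in> S1"
     and eq: "Gact (g1,g2) (mat 1) = circ_act (a_p p) (b_p p) z (mat 1)"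
    unfolding isotropy_def by auto
  have z0: "z \<noteq> 0" using S1_inv g by auto
  have eq2: "emb (g1 ** adj g2) = circ_act (a_p p) (b_p p) z (mat 1)" using eq
    by (simp add: Gact_def emb_mult)
  have ent: "emb (g1 ** adj g2) $ i $ j = circ_act (a_p p) (b_p p) z (mat 1) $ i $ j" for i j
    using eq2 by simp
  have "1 = z^p * inverse z ^ (p+2)" using ent[of 3 3] by (simp add: circ_nth cfac_def)
  also have "\<dots> = inverse z ^ 2"
  proof -
    have zz: "z^p * inverse z ^ p = 1" by (simp add: z0 flip: power_mult_distrib)
    show ?thesis by (metis zz power_add mult.assoc mult_1)
  qed
  finally have "z ^ 2 = 1" by (metis power_inverse inverse_1 inverse_inverse_eq)
  then have e: "z = 1 \<or> z = -1" by (simp add: power2_eq_1_iff)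
  have m: "g1 ** adj g2 = mat z"
    using ent[of 1 1] ent[of 1 2] ent[of 2 1] ent[of 2 2]
    by (simp add: mat2_eq_iff circ_nth cfac_def)
  have g1e: "g1 = mat z ** g2"
    by (metis m SU_inv[OF g(3)] matrix_mul_assoc matrix_mul_rid)
  define c0 where "c0 = z ^ p"
  define c1 where "c1 = z ^ (p+1)"
  have c0: "c0 * c0 = 1" unfolding c0_def using e by (auto simp flip: power_mult_distrib)
  have c1: "c0 * c1 = z" unfolding c0_def c1_def using e by (auto simp flip: power_mult_distrib power_add)
  have c0': "c0 = 1 \<or> c0 = -1" unfolding c0_def using pm1_pow[OF e] .
  define g0 where "g0 = g2 ** mat c0"
  have g0: "g0 \<in> SU" unfolding g0_def using SU_mult[OF g(3) mat_pm_SU[OF c0']] .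
  have h: "(mat c1, mat c0) \<in> H_p p" unfolding H_p_def c0_def c1_def using e by auto
  have "g1 = g0 ** mat c1"
    unfolding g1e g0_def mat2_eq_iff mm2 using c1 by (simp add: mult.assoc mult.commute)
  moreover have "g2 = g0 ** mat c0"
    unfolding g0_def mat2_eq_iff mm2 using c0 by (simp add: mult.assoc)
  ultimately show "g \<in> Kminus_p p"
    unfolding Kminus_p_def using g g0 h by force
next
  fix g assume "g \<in> Kminus_p p"
  then obtain g0 e where g0: "g0 \<in> SU" and e: "e = 1 \<or> e = -1"
     and g: "g = (g0 ** mat (e^(p+1)), g0 ** mat (e^p))"
    unfolding Kminus_p_def H_p_def by auto
  define c0 where "c0 = e ^ p"
  define c1 where "c1 = e ^ (p+1)"
  have c0: "c0 * c0 = 1" unfolding c0_def using e by (auto simp flip: power_mult_distrib)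
  have c1: "c0 * c1 = e" unfolding c0_def c1_def using e by (auto simp flip: power_mult_distrib power_add)
  have c0': "c0 = 1 \<or> c0 = -1" unfolding c0_def using pm1_pow[OF e] .
  have c1': "c1 = 1 \<or> c1 = -1" unfolding c1_def using pm1_pow[OF e] .
  have S: "g0 ** mat c1 \<in> SU" "g0 ** mat c0 \<in> SU"
    using SU_mult[OF g0 mat_pm_SU[OF c1']] SU_mult[OF g0 mat_pm_SU[OF c0']] by auto
  have eS: "e \<in> S1" using e unfolding S1_def by auto
  have cc: "cnj c0 = c0" using c0' by auto
  have "g0 ** mat c1 ** adj (g0 ** mat c0) = g0 ** mat c1 ** (mat c0 ** adj g0)"
    by (simp add: adj_mult adj_mat2 cc)
  also have "\<dots> = g0 ** (mat c1 ** mat c0) ** adj g0"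
    by (simp only: matrix_mul_assoc)
  also have "\<dots> = (mat (c1 * c0) ** g0) ** adj g0"
    by (simp only: mat_mat2 mat_comm2[of g0])
  also have "\<dots> = mat (c1 * c0) ** (g0 ** adj g0)"
    by (simp only: matrix_mul_assoc)
  also have "\<dots> = mat e" using SU_D(1)[OF g0] c1 by (simp add: mult.commute)
  finally have prod: "g0 ** mat c1 ** adj (g0 ** mat c0) = mat e" .
  have ez: "e ^ p * inverse e ^ (p + 2) = 1" using e
    by (auto simp flip: power_mult_distrib power_add)
  have "Gact (g0 ** mat c1, g0 ** mat c0) (mat 1) = circ_act (a_p p) (b_p p) e (mat 1)"
    unfolding Gact_def using prod ez
    by (simp add: emb_mult mat3_eq_iff circ_nth cfac_def)
  then show "g \<in> isotropy (a_p p) (b_p p) (mat 1)"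
    unfolding isotropy_def g c0_def[symmetric] c1_def[symmetric] using S eS by auto
qed

lemma uv_pow: assumes "(u::complex) * v = 1"
  shows "u ^ n * v ^ n = 1" "u ^ (n+1) * v ^ n = u" "u * v ^ (n+2) = v ^ (n+1)"
    "u ^ n * v ^ (n+2) = v ^ 2" "v ^ (n+1) * u ^ n = v"
proof -
  show a: "u ^ n * v ^ n = 1" using assms by (simp flip: power_mult_distrib)
  show "u ^ (n+1) * v ^ n = u" using a by (simp add: mult.assoc)
  show "v ^ (n+1) * u ^ n = v" using a by (simp add: mult.assoc mult.commute)
  show "u * v ^ (n+2) = v ^ (n+1)" using assms
    by (simp add: power_add mult.assoc[symmetric] power2_eq_square mult.commute)
  show "u ^ n * v ^ (n+2) = v ^ 2" using a
    by (metis power_add mult.assoc mult_1)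
qed

lemma diag_SU: assumes "a * cnj a = 1" shows "diag2 a (cnj a) \<in> SU"
proof -
  have "diag2 a (cnj a) ** adj (diag2 a (cnj a)) = mat 1" using assms
    by (simp add: mat2_eq_iff mm2 mult.commute)
  moreover have "det (diag2 a (cnj a)) = 1" using assms by (simp add: det_2)
  ultimately show ?thesis unfolding SU_def by simp
qed

lemma iso_Kplus: "isotropy (a_p p) (b_p p) (rot (pi/2)) = Kplus_p p"
proof (intro set_eqI iffI)
  fix g assume "g \<in> isotropy (a_p p) (b_p p) (rot (pi/2))"
  then obtain g1 g2 z where g: "g = (g1,g2)" "g1 \<in> SU" "g2 \<in> SU" "z \<in> S1"
     and eq: "Gact (g1,g2) (rot (pi/2)) = circ_act (a_p p) (b_p p) z (rot (pi/2))"
    unfolding isotropy_def by auto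
  have zc: "z * cnj z = 1" using S1_mult_cnj g by auto
  have iz: "inverse z = cnj z" using S1_inv g by auto
  have ent: "Gact (g1,g2) (rot (pi/2)) $ i $ j = circ_act (a_p p) (b_p p) z (rot (pi/2)) $ i $ j" for i j
    using eq by simp
  have a1: "g1$1$2 = 0" using ent[of 1 3] by (simp add: Gact_def mm3 circ_nth cfac_def)
  have a2: "g1$2$2 = cnj z ^ (p+1)" using ent[of 2 3] uv_pow(3)[OF zc, of p]
    by (simp add: Gact_def mm3 circ_nth cfac_def iz)
  have b1: "g2$1$2 = 0" using ent[of 3 1] by (simp add: Gact_def mm3 circ_nth cfac_def)
  have b2: "cnj (g2$2$2) = z ^ p" using ent[of 3 2] by (simp add: Gact_def mm3 circ_nth cfac_def)
  have a3: "g1$1$1 = z^(p+1)" using SU2_form(1)[OF g(2)] a2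
    by (metis complex_cnj_cnj complex_cnj_power)
  have G1: "g1 = diag2 (z^(p+1)) (cnj z ^ (p+1))"
    using SU2_form(2)[OF g(2)] a1 a2 a3 by (simp add: mat2_eq_iff)
  have b3: "g2$1$1 = z^p" using SU2_form(1)[OF g(3)] b2 by simp
  have b4: "g2$2$2 = cnj z ^ p" using b2 by (metis complex_cnj_cnj complex_cnj_power)
  have G2: "g2 = diag2 (z^p) (cnj z ^ p)"
    using SU2_form(2)[OF g(3)] b1 b3 b4 by (simp add: mat2_eq_iff)
  show "g \<in> Kplus_p p" unfolding Kplus_p_def using g(1,4) G1 G2 by blast
next
  fix g assume "g \<in> Kplus_p p"
  then obtain w where w: "w \<in> S1" and g: "g = (diag2 (w^(p+1)) (cnj w ^ (p+1)), diag2 (w^p) (cnj w ^ p))"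
    unfolding Kplus_p_def by auto
  have wc: "w * cnj w = 1" using S1_mult_cnj w by auto
  have iw: "inverse w = cnj w" using S1_inv w by auto
  have S: "diag2 (w^(p+1)) (cnj w ^ (p+1)) \<in> SU" "diag2 (w^p) (cnj w ^ p) \<in> SU"
  proof -
    have "w^n * cnj (w^n) = 1" for n using uv_pow(1)[OF wc, of n] by simp
    then show "diag2 (w^(p+1)) (cnj w ^ (p+1)) \<in> SU" "diag2 (w^p) (cnj w ^ p) \<in> SU"
      using diag_SU[of "w^(p+1)"] diag_SU[of "w^p"] by (simp_all only: complex_cnj_power)
  qed
  have "Gact g (rot (pi/2)) = circ_act (a_p p) (b_p p) w (rot (pi/2))"
    unfolding g mat3_eq_iff using uv_pow[OF wc, of p]
    by (simp add: Gact_def mm3 circ_nth cfac_def iw)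
  then show "g \<in> isotropy (a_p p) (b_p p) (rot (pi/2))"
    unfolding isotropy_def using S w g by auto
qed

lemma iso_H: assumes "0 < th" "th < pi/2"
  shows "isotropy (a_p p) (b_p p) (rot th) = H_p p"
proof -
  have s0: "sin th > 0" using assms by (intro sin_gt_zero) auto
  have c0: "cos th > 0" using assms by (intro cos_gt_zero) auto
  show ?thesis
  proof (intro set_eqI iffI)
    fix g assume "g \<in> isotropy (a_p p) (b_p p) (rot th)"
    then obtain g1 g2 z where g: "g = (g1,g2)" "g1 \<in> SU" "g2 \<in> SU" "z \<in> S1"
       and eq: "Gact (g1,g2) (rot th) = circ_act (a_p p) (b_p p) z (rot th)"
      unfolding isotropy_def by auto
    have z0: "z \<noteq> 0" using S1_inv g by auto
    have ent: "Gact (g1,g2) (rot th) $ i $ j = circ_act (a_p p) (b_p p) z (rot th) $ i $ j" for i j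
      using eq by simp
    have "1 = z^p * inverse z ^ (p+2)" using ent[of 3 3] c0 by (simp add: Gact_def mm3 circ_nth cfac_def)
    also have "\<dots> = inverse z ^ 2"
    proof -
      have zz: "z^p * inverse z ^ p = 1" by (simp add: z0 flip: power_mult_distrib)
      show ?thesis by (metis zz power_add mult.assoc mult_1)
    qed
    finally have "z ^ 2 = 1" by (metis power_inverse inverse_1 inverse_inverse_eq)
    then have e: "z = 1 \<or> z = -1" by (simp add: power2_eq_1_iff)
    have a1: "g1$1$2 = 0" using ent[of 1 3] s0 by (simp add: Gact_def mm3 circ_nth cfac_def)
    have a2: "g1$2$2 = z * inverse z ^ (p+2)" using ent[of 2 3] s0
      by (simp add: Gact_def mm3 circ_nth cfac_def)
    have b1: "g2$1$2 = 0" using ent[of 3 1] s0 by (simp add: Gact_def mm3 circ_nth cfac_def)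
    have b2: "cnj (g2$2$2) = z ^ p" using ent[of 3 2] s0 by (simp add: Gact_def mm3 circ_nth cfac_def)
    have a3: "g1$1$1 = cnj (g1$2$2)" using SU2_form(1)[OF g(2)] by simp
    have G1: "g1 = mat (z^(p+1))"
      using SU2_form(2)[OF g(2)] a1 a2 a3 e
      by (auto simp: mat2_eq_iff minus_one_power_iff)
    have b3: "g2$1$1 = z ^ p" using SU2_form(1)[OF g(3)] b2 by simp
    have b4: "g2$2$2 = cnj (z ^ p)" using b2 by (metis complex_cnj_cnj)
    have G2: "g2 = mat (z^p)"
      using SU2_form(2)[OF g(3)] b1 b3 b4 e
      by (auto simp: mat2_eq_iff minus_one_power_iff)
    show "g \<in> H_p p" unfolding H_p_def using g(1) G1 G2 e by blast
  next
    fix g assume "g \<in> H_p p"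
    then obtain e where e: "e = 1 \<or> e = -1" and g: "g = (mat (e^(p+1)), mat (e^p))"
      unfolding H_p_def by auto
    have S: "fst g \<in> SU" "snd g \<in> SU" using H_SU \<open>g \<in> H_p p\<close> by auto
    have eS: "e \<in> S1" using e unfolding S1_def by auto
    have "Gact g (rot th) = circ_act (a_p p) (b_p p) e (rot th)"
      unfolding g mat3_eq_iff using e
      by (auto simp: Gact_def mm3 circ_nth cfac_def minus_one_power_iff split: if_splits)
    then show "g \<in> isotropy (a_p p) (b_p p) (rot th)"
      unfolding isotropy_def using S eS by (cases g) auto
  qed
qed

lemma circ_eq: "circ_act (a_p p) (b_p p) z A = diag3 z z (z ^ p) ** A ** diag3 1 1 (inverse z ^ (p + 2))"
proof -
  have "z powi (- (int p + 2)) = inverse z ^ (p + 2)"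
    by (metis of_nat_add of_nat_numeral power_int_minus power_int_of_nat power_inverse)
  then show ?thesis unfolding circ_act_def a_p_def b_p_def by simp
qed

lemma adj_emb: "adj (emb g) = emb (adj g)" by (simp add: mat3_eq_iff)
lemma det_emb: "det (emb g) = det g" by (simp add: det_3 det_2)
lemma emb_one: "emb (mat 1) = mat 1" by (simp add: mat3_eq_iff)

lemma emb_SU: "g \<in> SU \<Longrightarrow> emb g \<in> SU"
proof -
  assume g: "g \<in> SU"
  have "emb g ** adj (emb g) = mat 1" using SU_D(1)[OF g] by (simp add: adj_emb emb_mult emb_one)
  then show ?thesis using SU_D(2)[OF g] unfolding SU_def by (simp add: det_emb)
qed

lemma Gact_SU: "g \<in> SU \<times> SU \<Longrightarrow> A \<in> SU \<Longrightarrow> Gact g A \<in> SU"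
  unfolding Gact_def by (cases g) (auto intro!: SU_mult emb_SU SU_adj)

lemma diag3_unit: "a * cnj a = 1 \<Longrightarrow> b * cnj b = 1 \<Longrightarrow> c * cnj c = 1 \<Longrightarrow>
  diag3 a b c ** adj (diag3 a b c) = mat 1"
  by (simp add: mat3_eq_iff mm3)

lemma circ_SU: assumes z: "z \<in> S1" and A: "A \<in> SU" shows "circ_act (a_p p) (b_p p) z A \<in> SU"
proof -
  define D1 where "D1 = diag3 z z (z ^ p)"
  define D2 where "D2 = diag3 1 1 (inverse z ^ (p + 2))"
  have zc: "z * cnj z = 1" using S1_mult_cnj z by auto
  have iz: "inverse z = cnj z" using S1_inv z by auto
  have u1: "D1 ** adj D1 = mat 1" unfolding D1_def
    by (rule diag3_unit) (use zc uv_pow(1)[OF zc, of p] in auto)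
  have u2: "D2 ** adj D2 = mat 1" unfolding D2_def iz
    by (rule diag3_unit) (use zc uv_pow(1)[OF zc, of "p+2"] in \<open>auto simp: mult.commute\<close>)
  have "D1 ** A ** D2 ** adj (D1 ** A ** D2) = D1 ** (A ** (D2 ** adj D2) ** adj A) ** adj D1"
    by (simp only: adj_mult matrix_mul_assoc)
  also have "\<dots> = mat 1" using u1 u2 SU_D(1)[OF A] by simp
  finally have "D1 ** A ** D2 ** adj (D1 ** A ** D2) = mat 1" .
  moreover have "det (D1 ** A ** D2) = 1"
  proof -
    have "det D1 * det D2 = z ^ (p+2) * inverse z ^ (p+2)"
      unfolding D1_def D2_def by (simp add: det_3 power_add power2_eq_square mult.commute mult.left_commute)
    also have "\<dots> = 1" using uv_pow(1)[OF zc, of "p+2"] iz by (simp only:)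
    finally show ?thesis using SU_D(2)[OF A] by (simp add: det_mul mult.commute)
  qed
  ultimately show ?thesis unfolding SU_def circ_eq D1_def[symmetric] D2_def[symmetric] by simp
qed

lemma Gact33: "Gact g A $ 3 $ 3 = A $ 3 $ 3"
  by (cases g) (simp add: Gact_def mm3)

lemma cfac33: "z \<in> S1 \<Longrightarrow> cmod (cfac p z 3 3) = 1"
  unfolding cfac_def S1_def by (simp add: norm_mult norm_power norm_inverse)

lemma orbit33: "z \<in> S1 \<Longrightarrow> cmod (circ_act (a_p p) (b_p p) z (Gact g A) $ 3 $ 3) = cmod (A $ 3 $ 3)"
  by (simp add: circ_nth Gact33 norm_mult cfac33)

lemma same_orbit33: "same_Gorbit (a_p p) (b_p p) A B \<Longrightarrow> cmod (B $ 3 $ 3) = cmod (A $ 3 $ 3)"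
  unfolding same_Gorbit_def using orbit33 by auto

lemma rot_SU: "rot th \<in> SU"
proof -
  have cs: "complex_of_real (cos th) * complex_of_real (cos th) + complex_of_real (sin th) * complex_of_real (sin th) = 1"
    by (metis of_real_1 of_real_add of_real_mult sin_cos_squared_add3 add.commute)
  have cs': "complex_of_real (sin th) * complex_of_real (sin th) + complex_of_real (cos th) * complex_of_real (cos th) = 1"
    using cs by (simp add: add.commute)
  have "rot th ** adj (rot th) = mat 1" using cs cs'
    by (simp add: mat3_eq_iff mm3 mult.commute)
  moreover have "det (rot th) = 1" using cs by (simp add: det_3)
  ultimately show ?thesis unfolding SU_def by simp
qed

definition mk2 :: "complex \<Rightarrow> complex \<Rightarrow> complex \<Rightarrow> complex \<Rightarrow> complex^2^2" where
  "mk2 a b c d = (\<chi> i j. if i = 1 then (if j = 1 then a else b) else (if j = 1 then c else d))"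

lemma mk2_nth[simp]: "mk2 a b c d $ 1 $ 1 = a" "mk2 a b c d $ 1 $ 2 = b"
  "mk2 a b c d $ 2 $ 1 = c" "mk2 a b c d $ 2 $ 2 = d"
  by (simp_all add: mk2_def)

lemma SU2_mk: assumes "x1 * cnj x1 + x2 * cnj x2 = 1" shows "mk2 (cnj x2) x1 (- cnj x1) x2 \<in> SU"
proof -
  have "mk2 (cnj x2) x1 (- cnj x1) x2 ** adj (mk2 (cnj x2) x1 (- cnj x1) x2) = mat 1"
    using assms by (simp add: mat2_eq_iff mm2 algebra_simps)
  moreover have "det (mk2 (cnj x2) x1 (- cnj x1) x2) = 1"
    using assms by (simp add: det_2 algebra_simps)
  ultimately show ?thesis unfolding SU_def by simp
qed

lemma norm_sq_c: "x * cnj x = complex_of_real (cmod x ^ 2)"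
  by (rule complex_norm_square[symmetric])

lemma SU3_entries: assumes "(U::complex^3^3) \<in> SU"
  shows "cmod (U$1$3)^2 + cmod (U$2$3)^2 + cmod (U$3$3)^2 = 1"
    "cmod (U$3$1)^2 + cmod (U$3$2)^2 + cmod (U$3$3)^2 = 1"
    "U$1$1 * cnj (U$1$1) + U$1$2 * cnj (U$1$2) + U$1$3 * cnj (U$1$3) = 1"
    "U$2$1 * cnj (U$2$1) + U$2$2 * cnj (U$2$2) + U$2$3 * cnj (U$2$3) = 1"
    "U$1$1 * cnj (U$2$1) + U$1$2 * cnj (U$2$2) + U$1$3 * cnj (U$2$3) = 0"
    "U$2$1 * cnj (U$1$1) + U$2$2 * cnj (U$1$2) + U$2$3 * cnj (U$1$3) = 0"
proof -
  have a: "U ** adj U = mat 1" and b: "adj U ** U = mat 1" using SU_D SU_inv assms by auto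
  have b33: "(adj U ** U) $ 3 $ 3 = 1" and a33: "(U ** adj U) $ 3 $ 3 = 1"
    and a11: "(U ** adj U) $ 1 $ 1 = 1" and a22: "(U ** adj U) $ 2 $ 2 = 1"
    and a12: "(U ** adj U) $ 1 $ 2 = 0" and a21: "(U ** adj U) $ 2 $ 1 = 0"
    using a b by simp_all
  have "complex_of_real (cmod (U$1$3)^2 + cmod (U$2$3)^2 + cmod (U$3$3)^2) = 1"
    unfolding of_real_add complex_norm_square using b33 unfolding mm3 by (simp add: mult.commute)
  then show "cmod (U$1$3)^2 + cmod (U$2$3)^2 + cmod (U$3$3)^2 = 1"
    by (metis of_real_eq_1_iff)
  have "complex_of_real (cmod (U$3$1)^2 + cmod (U$3$2)^2 + cmod (U$3$3)^2) = 1"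
    unfolding of_real_add complex_norm_square using a33 unfolding mm3 by simp
  then show "cmod (U$3$1)^2 + cmod (U$3$2)^2 + cmod (U$3$3)^2 = 1"
    by (metis of_real_eq_1_iff)
  show "U$1$1 * cnj (U$1$1) + U$1$2 * cnj (U$1$2) + U$1$3 * cnj (U$1$3) = 1"
    "U$2$1 * cnj (U$2$1) + U$2$2 * cnj (U$2$2) + U$2$3 * cnj (U$2$3) = 1"
    "U$1$1 * cnj (U$2$1) + U$1$2 * cnj (U$2$2) + U$1$3 * cnj (U$2$3) = 0"
    "U$2$1 * cnj (U$1$1) + U$2$2 * cnj (U$1$2) + U$2$3 * cnj (U$1$3) = 0"
    using a11 a22 a12 a21 unfolding mm3 by simp_all
qed

lemma pair_zero: assumes "cnj d = c * e" "cnj e = c * d" "cmod c < 1"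
  shows "d = 0" "e = 0"
proof -
  have "cnj d = c * cnj (cnj e)" using assms(1) by simp
  also have "\<dots> = (c * cnj c) * cnj d" using assms(2) by simp
  finally have "cnj d * (1 - c * cnj c) = 0" by (simp add: algebra_simps)
  moreover have "c * cnj c \<noteq> 1"
  proof
    assume "c * cnj c = 1"
    then have "complex_of_real (cmod c ^ 2) = 1" by (simp add: norm_sq_c)
    then have "cmod c ^ 2 = 1" by (metis of_real_eq_1_iff)
    then show False using power_strict_mono[of "cmod c" 1 2] assms(3) by simp
  qed
  ultimately show "d = 0" by simp
  then show "e = 0" using assms(2) by simp
qed

lemma SU3_unique:
  fixes U V :: "complex^3^3"
  assumes U: "U \<in> SU" and V: "V \<in> SU"
    and e: "U$1$3 = V$1$3" "U$2$3 = V$2$3" "U$3$1 = V$3$1" "U$3$2 = V$3$2" "U$3$3 = V$3$3"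
    and c: "cmod (U$3$3) < 1"
  shows "U = V"
proof -
  note cu = SU3_cof[OF U] and cv = SU3_cof[OF V]
  have d1: "cnj (U$1$1 - V$1$1) = U$3$3 * (U$2$2 - V$2$2)"
    unfolding complex_cnj_diff cu(1) cv(1) using e by (simp add: algebra_simps)
  have d2: "cnj (U$2$2 - V$2$2) = U$3$3 * (U$1$1 - V$1$1)"
    unfolding complex_cnj_diff cu(4) cv(4) using e by (simp add: algebra_simps)
  have d3: "cnj (U$1$2 - V$1$2) = - U$3$3 * (U$2$1 - V$2$1)"
    unfolding complex_cnj_diff cu(2) cv(2) using e by (simp add: algebra_simps)
  have d4: "cnj (U$2$1 - V$2$1) = - U$3$3 * (U$1$2 - V$1$2)"
    unfolding complex_cnj_diff cu(3) cv(3) using e by (simp add: algebra_simps)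
  have c': "cmod (- U$3$3) < 1" using c by simp
  have "U$1$1 = V$1$1" "U$2$2 = V$2$2" using pair_zero[OF d1 d2 c] by simp_all
  moreover have "U$1$2 = V$1$2" "U$2$1 = V$2$1" using pair_zero[OF d3 d4 c'] by simp_all
  ultimately show ?thesis using e unfolding mat3_eq_iff by simp
qed

lemma circ_back: "z \<noteq> 0 \<Longrightarrow> circ_act (a_p p) (b_p p) z (circ_act (a_p p) (b_p p) (inverse z) A) = A"
  unfolding mat3_eq_iff circ_nth cfac_def by (simp add: field_simps power_inverse)

lemma normsq_sum1: assumes "cmod a ^ 2 + cmod b ^ 2 = 1" shows "a * cnj a + b * cnj b = 1"
proof -
  have "a * cnj a + b * cnj b = complex_of_real (cmod a ^ 2 + cmod b ^ 2)"
    unfolding of_real_add complex_norm_square ..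
  then show ?thesis using assms by simp
qed

lemma coverage: assumes A: "A \<in> SU"
  shows "\<exists>z\<in>S1. \<exists>g1\<in>SU. \<exists>g2\<in>SU. \<exists>th\<in>{0..pi/2}. A = circ_act (a_p p) (b_p p) z (Gact (g1,g2) (rot th))"
proof -
  define w where "w = A$3$3"
  obtain z where zS: "z \<in> S1" and zw: "z^2 * w = of_real (cmod w)"
  proof (cases "w = 0")
    case True
    then show ?thesis using that[of 1] by (simp add: S1_def)
  next
    case False
    define z where "z = cis (- Arg w / 2)"
    have "z^2 = cis (- Arg w)" unfolding z_def by (simp add: power2_eq_square cis_mult)
    moreover have "w = of_real (cmod w) * cis (Arg w)" by (metis rcis_cmod_Arg rcis_def)
    ultimately have "z^2 * w = of_real (cmod w) * (cis (- Arg w) * cis (Arg w))"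
      by (metis mult.left_commute)
    also have "\<dots> = of_real (cmod w)" by (simp add: cis_mult)
    finally show ?thesis using that[of z] unfolding z_def S1_def by simp
  qed
  have z0: "z \<noteq> 0" using S1_inv zS by auto
  have izS: "inverse z \<in> S1" using zS unfolding S1_def by (simp add: norm_inverse)
  define Ap where "Ap = circ_act (a_p p) (b_p p) (inverse z) A"
  have ApS: "Ap \<in> SU" unfolding Ap_def by (rule circ_SU[OF izS A])
  have hback: "A = circ_act (a_p p) (b_p p) z Ap" unfolding Ap_def using circ_back[OF z0] by simp
  define c where "c = cmod w"
  have Ap33: "Ap$3$3 = of_real c"
  proof -
    have "Ap$3$3 = inverse z ^ p * z ^ (p+2) * w" unfolding Ap_def w_def by (simp add: circ_nth cfac_def)
    also have "\<dots> = z^2 * w" using z0 by (simp add: power_add power_inverse field_simps power2_eq_square)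
    finally show ?thesis using zw c_def by simp
  qed
  have c0: "0 \<le> c" unfolding c_def by simp
  have col: "cmod (Ap$1$3)^2 + cmod (Ap$2$3)^2 + c^2 = 1" using SU3_entries(1)[OF ApS] Ap33 c0 by simp
  have row: "cmod (Ap$3$1)^2 + cmod (Ap$3$2)^2 + c^2 = 1" using SU3_entries(2)[OF ApS] Ap33 c0 by simp
  have c1: "c \<le> 1"
  proof -
    have "c^2 \<le> 1" using col zero_le_power2[of "cmod (Ap$1$3)"] zero_le_power2[of "cmod (Ap$2$3)"] by linarith
    then show ?thesis using c0 power2_le_imp_le[of c 1] by simp
  qed
  have "\<exists>g1\<in>SU. \<exists>g2\<in>SU. \<exists>th\<in>{0..pi/2}. Ap = Gact (g1,g2) (rot th)"
  proof (cases "c = 1")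
    case True
    have c2: "c^2 = 1" using True by simp
    note nn = col row c2 zero_le_power2[of "cmod (Ap$1$3)"] zero_le_power2[of "cmod (Ap$2$3)"]
        zero_le_power2[of "cmod (Ap$3$1)"] zero_le_power2[of "cmod (Ap$3$2)"]
    have "cmod (Ap$1$3)^2 = 0" using nn by linarith
    moreover have "cmod (Ap$2$3)^2 = 0" using nn by linarith
    moreover have "cmod (Ap$3$1)^2 = 0" using nn by linarith
    moreover have "cmod (Ap$3$2)^2 = 0" using nn by linarith
    ultimately have z13: "Ap$1$3 = 0" "Ap$2$3 = 0" "Ap$3$1 = 0" "Ap$3$2 = 0" by simp_all
    define B where "B = mk2 (Ap$1$1) (Ap$1$2) (Ap$2$1) (Ap$2$2)"
    have "B ** adj B = mat 1" using SU3_entries(3-6)[OF ApS] z13 by (simp add: B_def mat2_eq_iff mm2)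
    moreover have "det B = 1" using SU_D(2)[OF ApS] z13 Ap33 True by (simp add: B_def det_2 det_3)
    ultimately have BS: "B \<in> SU" unfolding SU_def by simp
    have "Ap = Gact (B, mat 1) (rot 0)" using z13 Ap33 True
      by (simp add: mat3_eq_iff Gact_def mm3 B_def)
    then show ?thesis using BS SU_one by force
  next
    case False
    then have cl: "c < 1" using c1 by simp
    define s where "s = sqrt (1 - c^2)"
    have s0: "s > 0" unfolding s_def using cl c0 by (simp add: power_less_one_iff abs_if)
    have ss: "s^2 = 1 - c^2" unfolding s_def using c1 c0 by (simp add: power_le_one)
    define th where "th = arccos c"
    have th: "th \<in> {0..pi/2}" unfolding th_def using c0 c1 arccos_le_pi2[of c] arccos_lbound[of c] by simp
    have cth: "cos th = c" unfolding th_def using c0 c1 by simp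
    have sth: "sin th = s" unfolding th_def s_def using c0 c1 by (simp add: sin_arccos)
    define x1 where "x1 = - Ap$1$3 / of_real s"
    define x2 where "x2 = - Ap$2$3 / of_real s"
    define y1 where "y1 = cnj (Ap$3$1) / of_real s"
    define y2 where "y2 = cnj (Ap$3$2) / of_real s"
    have xn: "x1 * cnj x1 + x2 * cnj x2 = 1"
    proof (rule normsq_sum1)
      have "cmod x1 ^ 2 + cmod x2 ^ 2 = (cmod (Ap$1$3)^2 + cmod (Ap$2$3)^2) / s^2"
        unfolding x1_def x2_def using s0 by (simp add: norm_divide power_divide add_divide_distrib)
      also have "\<dots> = 1" using col ss s0 by (simp add: field_simps)
      finally show "cmod x1 ^ 2 + cmod x2 ^ 2 = 1" .
    qed
    have yn: "y1 * cnj y1 + y2 * cnj y2 = 1"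
    proof (rule normsq_sum1)
      have "cmod y1 ^ 2 + cmod y2 ^ 2 = (cmod (Ap$3$1)^2 + cmod (Ap$3$2)^2) / s^2"
        unfolding y1_def y2_def using s0 by (simp add: norm_divide power_divide add_divide_distrib)
      also have "\<dots> = 1" using row ss s0 by (simp add: field_simps)
      finally show "cmod y1 ^ 2 + cmod y2 ^ 2 = 1" .
    qed
    define g1 where "g1 = mk2 (cnj x2) x1 (- cnj x1) x2"
    define g2 where "g2 = mk2 (cnj y2) y1 (- cnj y1) y2"
    have g1S: "g1 \<in> SU" unfolding g1_def by (rule SU2_mk[OF xn])
    have g2S: "g2 \<in> SU" unfolding g2_def by (rule SU2_mk[OF yn])
    define M where "M = Gact (g1,g2) (rot th)"
    have MS: "M \<in> SU" unfolding M_def using Gact_SU g1S g2S rot_SU by auto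
    have sn: "complex_of_real s \<noteq> 0" using s0 by simp
    have "M = Ap"
    proof (rule SU3_unique[OF MS ApS])
      show "M$1$3 = Ap$1$3" using sn unfolding M_def by (simp add: Gact_def mm3 g1_def x1_def sth)
      show "M$2$3 = Ap$2$3" using sn unfolding M_def by (simp add: Gact_def mm3 g1_def x2_def sth)
      show "M$3$1 = Ap$3$1" using sn unfolding M_def by (simp add: Gact_def mm3 g2_def y1_def sth)
      show "M$3$2 = Ap$3$2" using sn unfolding M_def by (simp add: Gact_def mm3 g2_def y2_def sth)
      show "M$3$3 = Ap$3$3" unfolding M_def by (simp add: Gact_def mm3 cth Ap33)
      show "cmod (M$3$3) < 1" unfolding M_def using cl c0 by (simp add: Gact_def mm3 cth)
    qed
    then show ?thesis using g1S g2S th unfolding M_def by blast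
  qed
  then show ?thesis using hback zS by blast
qed

lemma vec_has_vector_derivative:
  fixes f :: "real \<Rightarrow> 'a::real_normed_vector^'n"
  assumes "\<And>i. ((\<lambda>x. f x $ i) has_vector_derivative f' $ i) F"
  shows "(f has_vector_derivative f') F"
  using assms unfolding has_vector_derivative_def has_derivative_def
  by (auto intro!: vec_tendstoI bounded_linear_scaleR_left)

lemma nth_has_vector_derivative:
  "(f has_vector_derivative f') F \<Longrightarrow> ((\<lambda>x. f x $ i) has_vector_derivative f' $ i) F"
  by (rule bounded_linear.has_vector_derivative[OF bounded_linear_vec_nth])

lemma C1_vec:
  fixes f :: "real \<Rightarrow> 'a::real_normed_vector^'n"
  assumes "\<And>i. (\<lambda>x. f x $ i) C1_differentiable_on S"
  shows "f C1_differentiable_on S"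
proof -
  have "\<forall>i. \<exists>D. (\<forall>x\<in>S. ((\<lambda>x. f x $ i) has_vector_derivative D x) (at x)) \<and> continuous_on S D"
    using assms unfolding C1_differentiable_on_def by blast
  then obtain D where D: "\<And>i. \<forall>x\<in>S. ((\<lambda>x. f x $ i) has_vector_derivative D i x) (at x)"
    "\<And>i. continuous_on S (D i)" by metis
  have d1: "\<forall>x\<in>S. (f has_vector_derivative (\<chi> i. D i x)) (at x)"
    using D(1) by (auto intro!: vec_has_vector_derivative)
  have d2: "continuous_on S (\<lambda>x. \<chi> i. D i x)" using D(2) by (auto intro!: continuous_on_vec_lambda)
  show ?thesis unfolding C1_differentiable_on_def using d1 d2 by (intro exI[of _ "\<lambda>x. \<chi> i. D i x"]) auto
qed

lemma C1_nth:
  assumes "f C1_differentiable_on S" shows "(\<lambda>x. f x $ i) C1_differentiable_on S"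
proof -
  obtain D where D: "\<forall>x\<in>S. (f has_vector_derivative D x) (at x)" "continuous_on S D"
    using assms unfolding C1_differentiable_on_def by blast
  then show ?thesis unfolding C1_differentiable_on_def
    by (auto intro!: exI[of _ "\<lambda>x. D x $ i"] nth_has_vector_derivative continuous_on_component)
qed

lemma C1_mat:
  fixes f :: "real \<Rightarrow> 'a::real_normed_vector^'n^'m"
  assumes "\<And>i j. (\<lambda>x. f x $ i $ j) C1_differentiable_on S"
  shows "f C1_differentiable_on S"
  using assms by (intro C1_vec) auto

lemma C1_matmul3:
  fixes f g :: "real \<Rightarrow> complex^3^3"
  assumes "f C1_differentiable_on S" "g C1_differentiable_on S"
  shows "(\<lambda>x. f x ** g x) C1_differentiable_on S"
proof (rule C1_mat)
  fix i j
  have e1: "\<And>i j. (\<lambda>x. f x $ i $ j) C1_differentiable_on S"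
    using C1_nth[OF C1_nth[OF assms(1)]] by blast
  have e2: "\<And>i j. (\<lambda>x. g x $ i $ j) C1_differentiable_on S"
    using C1_nth[OF C1_nth[OF assms(2)]] by blast
  note e = e1 e2
  show "(\<lambda>x. (f x ** g x) $ i $ j) C1_differentiable_on S"
    unfolding mm3 by (intro C1_differentiable_on_add C1_differentiable_on_mult e)
qed

lemma C1_cnj: assumes "f C1_differentiable_on S" shows "(\<lambda>x. cnj (f x)) C1_differentiable_on S"
proof -
  obtain D where D: "\<forall>x\<in>S. (f has_vector_derivative D x) (at x)" "continuous_on S D"
    using assms unfolding C1_differentiable_on_def by blast
  then show ?thesis unfolding C1_differentiable_on_def
    by (auto intro!: exI[of _ "\<lambda>x. cnj (D x)"] bounded_linear.has_vector_derivative[OF bounded_linear_cnj]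
        continuous_intros)
qed

lemma C1_real:
  assumes "\<And>x. (f has_real_derivative f' x) (at x)" "continuous_on S f'"
  shows "(\<lambda>x. complex_of_real (f x)) C1_differentiable_on S"
  unfolding C1_differentiable_on_def using assms
  by (auto intro!: exI[of _ "\<lambda>x. complex_of_real (f' x)"] has_vector_derivative_of_real continuous_intros)

lemma C1_cos: "(\<lambda>x. complex_of_real (cos (a * x))) C1_differentiable_on S"
  by (rule C1_real[where f'="\<lambda>x. - sin (a * x) * a"]) (auto intro!: derivative_eq_intros continuous_intros)

lemma C1_sin: "(\<lambda>x. complex_of_real (sin (a * x))) C1_differentiable_on S"
  by (rule C1_real[where f'="\<lambda>x. cos (a * x) * a"]) (auto intro!: derivative_eq_intros continuous_intros)

lemma cis_split: "cis t = complex_of_real (cos t) + \<i> * complex_of_real (sin t)"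
  by (simp add: complex_eq_iff)

lemma C1_cis: "(\<lambda>x. cis (a * x)) C1_differentiable_on S"
  unfolding cis_split by (intro C1_differentiable_on_add C1_differentiable_on_mult C1_cos C1_sin) auto

lemma C1_power: "f C1_differentiable_on S \<Longrightarrow> (\<lambda>x. (f x :: complex) ^ n) C1_differentiable_on S"
  by (induction n) auto

lemma C1_cis': "(\<lambda>x. cis (- (a * x))) C1_differentiable_on S"
  using C1_cis[of "- a" S] by simp

lemma C1_mat2:
  fixes f :: "real \<Rightarrow> complex^2^2"
  assumes "(\<lambda>x. f x $ 1 $ 1) C1_differentiable_on S" "(\<lambda>x. f x $ 1 $ 2) C1_differentiable_on S"
    "(\<lambda>x. f x $ 2 $ 1) C1_differentiable_on S" "(\<lambda>x. f x $ 2 $ 2) C1_differentiable_on S"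
  shows "f C1_differentiable_on S"
proof (rule C1_mat)
  fix i j :: 2 show "(\<lambda>x. f x $ i $ j) C1_differentiable_on S"
    using exhaust_2[of i] exhaust_2[of j] assms by auto
qed

lemma C1_mat3:
  fixes f :: "real \<Rightarrow> complex^3^3"
  assumes "(\<lambda>x. f x $ 1 $ 1) C1_differentiable_on S" "(\<lambda>x. f x $ 1 $ 2) C1_differentiable_on S"
    "(\<lambda>x. f x $ 1 $ 3) C1_differentiable_on S"
    "(\<lambda>x. f x $ 2 $ 1) C1_differentiable_on S" "(\<lambda>x. f x $ 2 $ 2) C1_differentiable_on S"
    "(\<lambda>x. f x $ 2 $ 3) C1_differentiable_on S"
    "(\<lambda>x. f x $ 3 $ 1) C1_differentiable_on S" "(\<lambda>x. f x $ 3 $ 2) C1_differentiable_on S"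
    "(\<lambda>x. f x $ 3 $ 3) C1_differentiable_on S"
  shows "f C1_differentiable_on S"
proof (rule C1_mat)
  fix i j :: 3 show "(\<lambda>x. f x $ i $ j) C1_differentiable_on S"
    using exhaust_3[of i] exhaust_3[of j] assms by auto
qed

definition kp :: "real \<Rightarrow> real \<Rightarrow> real \<Rightarrow> real \<Rightarrow> complex^2^2" where
  "kp ph al be t = mk2 (of_real (cos (ph*t)) * cis (al*t)) (- (of_real (sin (ph*t)) * cis (- (be*t))))
                   (of_real (sin (ph*t)) * cis (be*t)) (of_real (cos (ph*t)) * cis (- (al*t)))"

lemma kp_SU: "kp ph al be t \<in> SU"
proof -
  define x1 where "x1 = - (of_real (sin (ph*t)) * cis (- (be*t)))"
  define x2 where "x2 = of_real (cos (ph*t)) * cis (- (al*t))"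
  have "kp ph al be t = mk2 (cnj x2) x1 (- cnj x1) x2"
    unfolding kp_def x1_def x2_def by (simp add: cis_cnj)
  moreover have "x1 * cnj x1 + x2 * cnj x2 = 1"
  proof (rule normsq_sum1)
    show "cmod x1 ^ 2 + cmod x2 ^ 2 = 1" unfolding x1_def x2_def by (simp add: norm_mult power_mult_distrib)
  qed
  ultimately show ?thesis using SU2_mk by simp
qed

lemma kp_0: "kp ph al be 0 = mat 1"
  by (simp add: kp_def mat2_eq_iff)

lemma kp_C1: "kp ph al be C1_differentiable_on S"
  unfolding kp_def by (rule C1_mat2) (simp_all add: C1_cos C1_sin C1_cis C1_cis')

lemma kp_1: assumes g: "(g::complex^2^2) \<in> SU" shows "\<exists>ph al be. kp ph al be 1 = g"
proof -
  define a where "a = g$1$1"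
  define b where "b = g$2$1"
  have g22: "g$2$2 = cnj a" and g12: "g$1$2 = - cnj b" using SU2_form[OF g] a_def b_def by auto
  have "(adj g ** g) $ 1 $ 1 = 1" using SU_inv[OF g] by simp
  then have "cnj a * a + cnj b * b = 1" unfolding mm2 a_def b_def by simp
  then have "complex_of_real (cmod a ^ 2 + cmod b ^ 2) = 1"
    unfolding of_real_add complex_norm_square by (simp add: mult.commute)
  then have ab: "cmod a ^ 2 + cmod b ^ 2 = 1" by (metis of_real_eq_1_iff)
  then have a1: "cmod a \<le> 1" by (metis abs_norm_cancel abs_square_le_1 le_add_same_cancel1 zero_le_power2)
  define ph where "ph = arccos (cmod a)"
  have a0: "-1 \<le> cmod a" by (smt (verit) norm_ge_zero)
  have cph: "cos ph = cmod a" unfolding ph_def using a1 a0 by (simp add: cos_arccos)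
  have sph: "sin ph = cmod b" unfolding ph_def using a1 a0 ab
    by (simp add: sin_arccos real_sqrt_unique)
  have "kp ph (Arg a) (Arg b) 1 = g"
    unfolding kp_def mat2_eq_iff using g22 g12 cph sph rcis_cmod_Arg[of a] rcis_cmod_Arg[of b]
    by (simp add: a_def[symmetric] b_def[symmetric] rcis_cnj rcis_def)
  then show ?thesis by blast
qed

lemma C1_emb: assumes "f C1_differentiable_on S" shows "(\<lambda>x. emb (f x)) C1_differentiable_on S"
proof -
  have e: "\<And>i j. (\<lambda>x. f x $ i $ j) C1_differentiable_on S"
    using C1_nth[OF C1_nth[OF assms]] by blast
  show ?thesis by (rule C1_mat3) (simp_all add: e)
qed

lemma C1_rot: "(\<lambda>x. rot (a * x)) C1_differentiable_on S"
  by (rule C1_mat3) (simp_all add: C1_cos C1_sin)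

lemma C1_diag3: assumes "f1 C1_differentiable_on S" "f2 C1_differentiable_on S" "f3 C1_differentiable_on S"
  shows "(\<lambda>x. diag3 (f1 x) (f2 x) (f3 x)) C1_differentiable_on S"
  by (rule C1_mat3) (simp_all add: assms)

lemma circ_one: "circ_act (a_p p) (b_p p) 1 A = A"
  by (simp add: mat3_eq_iff circ_nth cfac_def)

lemma path_from_one: fixes U :: "complex^3^3" assumes U: "U \<in> SU"
  shows "\<exists>P. P C1_differentiable_on {0..1} \<and> (\<forall>t. P t \<in> SU) \<and> P 0 = mat 1 \<and> P 1 = U"
proof -
  obtain z g1 g2 th where z: "z \<in> S1" and g: "g1 \<in> SU" "g2 \<in> SU"
    and Ue: "U = circ_act (a_p 0) (b_p 0) z (Gact (g1,g2) (rot th))"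
    using coverage[OF U, of 0] by blast
  obtain ph1 al1 be1 where k1: "kp ph1 al1 be1 1 = g1" using kp_1 g(1) by blast
  obtain ph2 al2 be2 where k2: "kp ph2 al2 be2 1 = adj g2" using kp_1 SU_adj[OF g(2)] by blast
  define al where "al = Arg z"
  have zc: "z = cis al" using rcis_cmod_Arg[of z] z unfolding al_def S1_def by (simp add: rcis_def)
  define P where "P t = circ_act (a_p 0) (b_p 0) (cis (al*t))
     (Gact (kp ph1 al1 be1 t, adj (kp ph2 al2 be2 t)) (rot (th*t)))" for t
  have PS: "\<forall>t. P t \<in> SU" unfolding P_def
    by (auto intro!: circ_SU Gact_SU kp_SU SU_adj rot_SU simp: S1_def)
  have P0: "P 0 = mat 1" unfolding P_def
    by (simp add: kp_0 rot0 circ_one Gact_def emb_one)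
  have P1: "P 1 = U" unfolding P_def Ue zc k1 k2 by simp
  have Pe: "P = (\<lambda>t. diag3 (cis (al*t)) (cis (al*t)) (cis (al*t) ^ 0) **
      (emb (kp ph1 al1 be1 t) ** rot (th*t) ** emb (kp ph2 al2 be2 t)) **
      diag3 1 1 (cis (- (al*t)) ^ (0 + 2)))"
    unfolding P_def circ_eq Gact_def by (simp add: matrix_mul_assoc)
  have "P C1_differentiable_on {0..1}" unfolding Pe
    by (intro C1_matmul3 C1_diag3 C1_emb kp_C1 C1_rot C1_cis C1_cis' C1_power C1_differentiable_on_const)
  then show ?thesis using PS P0 P1 by blast
qed

lemma path_exists: fixes A B :: "complex^3^3" assumes A: "A \<in> SU" and B: "B \<in> SU"
  shows "\<exists>g. g C1_differentiable_on {0..1} \<and> (\<forall>s\<in>{0..1}. g s \<in> SU) \<and> g 0 = A \<and> g 1 = B"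
proof -
  obtain P where P: "P C1_differentiable_on {0..1}" "\<forall>t. P t \<in> SU" "P 0 = mat 1" "P 1 = adj A ** B"
    using path_from_one[OF SU_mult[OF SU_adj[OF A] B]] by blast
  have "(\<lambda>t. A ** P t) C1_differentiable_on {0..1}"
    by (intro C1_matmul3 P(1) C1_differentiable_on_const)
  moreover have "\<forall>s\<in>{0..1}. A ** P s \<in> SU" using SU_mult[OF A] P(2) by auto
  moreover have "A ** P 0 = A" using P(3) by simp
  moreover have "A ** P 1 = B" using P(4) SU_D(1)[OF A] by (simp add: matrix_mul_assoc)
  ultimately show ?thesis by blast
qed

lemma esch_expand: "esch_sqnorm t Y =
   t * cmod (Y$1$1)^2 + t * cmod (Y$1$2)^2 + cmod (Y$1$3)^2 +
   t * cmod (Y$2$1)^2 + t * cmod (Y$2$2)^2 + cmod (Y$2$3)^2 +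
   cmod (Y$3$1)^2 + cmod (Y$3$2)^2 + t * cmod (Y$3$3)^2"
  unfolding esch_sqnorm_def by (simp add: sum_3)

lemma cs2: "(a * b + c * d)^2 \<le> (a^2 + c^2) * (b^2 + d^2)" for a b c d :: real
proof -
  have "0 \<le> (a * d - c * b)^2" by simp
  then show ?thesis by (simp add: power2_eq_square algebra_simps)
qed

lemma pt_ineq:
  fixes U Y :: "complex^3^3"
  assumes U: "U \<in> SU" and sk: "adj Y + Y = 0" and t: "0 \<le> t"
  shows "(2 * Re (cnj (U$3$3) * (U ** Y)$3$3))^2 \<le>
     2 * cmod (U$3$3)^2 * (1 - cmod (U$3$3)^2) * esch_sqnorm t Y"
proof -
  have "(adj Y + Y) $ 3 $ 3 = 0" using sk by simp
  then have y33: "Re (Y$3$3) = 0" by (simp add: complex_eq_iff)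
  have "(adj Y + Y) $ 1 $ 3 = 0" using sk by simp
  then have "Y$1$3 = - cnj (Y$3$1)" by (simp add: add_eq_0_iff)
  then have y31: "cmod (Y$3$1) = cmod (Y$1$3)" by simp
  have "(adj Y + Y) $ 2 $ 3 = 0" using sk by simp
  then have "Y$2$3 = - cnj (Y$3$2)" by (simp add: add_eq_0_iff)
  then have y32: "cmod (Y$3$2) = cmod (Y$2$3)" by simp
  define q where "q = cmod (U$3$3)^2"
  define S where "S = cmod (Y$1$3)^2 + cmod (Y$2$3)^2"
  have row: "cmod (U$3$1)^2 + cmod (U$3$2)^2 = 1 - q" using SU3_entries(2)[OF U] q_def by simp
  have E: "2 * S \<le> esch_sqnorm t Y" unfolding esch_expand S_def using y31 y32 t by simp
  have "Re (cnj (U$3$3) * (U ** Y)$3$3) = Re (cnj (U$3$3) * (U$3$1 * Y$1$3 + U$3$2 * Y$2$3))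
        + cmod (U$3$3)^2 * Re (Y$3$3)"
    unfolding mm3 using cmod_power2[of "U$3$3"] by (simp add: algebra_simps power2_eq_square)
  also have "\<dots> = Re (cnj (U$3$3) * (U$3$1 * Y$1$3 + U$3$2 * Y$2$3))" using y33 by simp
  finally have re: "Re (cnj (U$3$3) * (U ** Y)$3$3) = Re (cnj (U$3$3) * (U$3$1 * Y$1$3 + U$3$2 * Y$2$3))" .
  have "\<bar>Re (cnj (U$3$3) * (U$3$1 * Y$1$3 + U$3$2 * Y$2$3))\<bar> \<le> cmod (cnj (U$3$3) * (U$3$1 * Y$1$3 + U$3$2 * Y$2$3))"
    by (rule abs_Re_le_cmod)
  also have "\<dots> \<le> cmod (U$3$3) * (cmod (U$3$1) * cmod (Y$1$3) + cmod (U$3$2) * cmod (Y$2$3))"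
    by (simp add: norm_mult mult_left_mono norm_triangle_le)
  finally have r1: "\<bar>Re (cnj (U$3$3) * (U ** Y)$3$3)\<bar> \<le> cmod (U$3$3) * (cmod (U$3$1) * cmod (Y$1$3) + cmod (U$3$2) * cmod (Y$2$3))"
    using re by simp
  have "(2 * Re (cnj (U$3$3) * (U ** Y)$3$3))^2 = 4 * (\<bar>Re (cnj (U$3$3) * (U ** Y)$3$3)\<bar>)^2"
    by (simp only: power2_abs power_mult_distrib) simp
  also have "\<dots> \<le> 4 * (cmod (U$3$3) * (cmod (U$3$1) * cmod (Y$1$3) + cmod (U$3$2) * cmod (Y$2$3)))^2"
    using r1 by (intro mult_left_mono power_mono) auto
  also have "\<dots> = 4 * q * (cmod (U$3$1) * cmod (Y$1$3) + cmod (U$3$2) * cmod (Y$2$3))^2"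
    unfolding q_def by (simp add: power_mult_distrib)
  also have "\<dots> \<le> 4 * q * ((1 - q) * S)"
    using cs2[of "cmod (U$3$1)" "cmod (Y$1$3)" "cmod (U$3$2)" "cmod (Y$2$3)"] row
    unfolding S_def q_def by (intro mult_left_mono) auto
  also have "\<dots> \<le> 2 * q * (1 - q) * esch_sqnorm t Y"
  proof -
    have "0 \<le> q * (1 - q)" using row q_def by (metis add_nonneg_nonneg mult_nonneg_nonneg zero_le_power2)
    then have "(q * (1 - q)) * (2 * S) \<le> (q * (1 - q)) * esch_sqnorm t Y" by (rule mult_left_mono[OF E])
    then show ?thesis by (simp add: algebra_simps)
  qed
  finally show ?thesis unfolding q_def .
qed

lemma matmul_deriv3:
  fixes f g :: "real \<Rightarrow> complex^3^3"
  assumes f: "(f has_vector_derivative f') (at x)" and g: "(g has_vector_derivative g') (at x)"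
  shows "((\<lambda>y. f y ** g y) has_vector_derivative (f' ** g x + f x ** g')) (at x)"
proof (rule vec_has_vector_derivative, rule vec_has_vector_derivative)
  fix i j
  have fe: "\<And>i j. ((\<lambda>y. f y $ i $ j) has_vector_derivative f' $ i $ j) (at x)"
    using nth_has_vector_derivative[OF nth_has_vector_derivative[OF f]] by blast
  have ge: "\<And>i j. ((\<lambda>y. g y $ i $ j) has_vector_derivative g' $ i $ j) (at x)"
    using nth_has_vector_derivative[OF nth_has_vector_derivative[OF g]] by blast
  show "((\<lambda>y. (f y ** g y) $ i $ j) has_vector_derivative (f' ** g x + f x ** g') $ i $ j) (at x)"
  proof -
    have m: "((\<lambda>y. f y $ i $ a * g y $ a $ j) has_vector_derivative
       (f x $ i $ a * g' $ a $ j + f' $ i $ a * g x $ a $ j)) (at x)" for a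
      by (rule has_vector_derivative_mult[OF fe ge])
    show ?thesis unfolding mm3 vector_add_component
      by (rule has_vector_derivative_eq_rhs[OF has_vector_derivative_add[OF has_vector_derivative_add[OF m m] m]])
        (simp add: algebra_simps)
  qed
qed

lemma adj_deriv:
  fixes f :: "real \<Rightarrow> complex^'n^'n"
  assumes f: "(f has_vector_derivative f') F"
  shows "((\<lambda>y. adj (f y)) has_vector_derivative adj f') F"
proof (rule vec_has_vector_derivative, rule vec_has_vector_derivative)
  fix i j
  have "((\<lambda>y. f y $ j $ i) has_vector_derivative f' $ j $ i) F"
    using nth_has_vector_derivative[OF nth_has_vector_derivative[OF f]] by blast
  then show "((\<lambda>y. adj (f y) $ i $ j) has_vector_derivative adj f' $ i $ j) F"
    by (simp add: bounded_linear.has_vector_derivative[OF bounded_linear_cnj])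
qed

lemma skew:
  fixes g :: "real \<Rightarrow> complex^3^3"
  assumes S: "\<forall>s\<in>{0..1}. g s \<in> SU" and D: "(g has_vector_derivative D) (at x)" and x: "x \<in> {0<..<1}"
  shows "adj (adj (g x) ** D) + adj (g x) ** D = 0"
proof -
  have h: "((\<lambda>y. adj (g y) ** g y) has_vector_derivative (adj D ** g x + adj (g x) ** D)) (at x)"
    by (rule matmul_deriv3[OF adj_deriv[OF D] D])
  have h0: "((\<lambda>y. adj (g y) ** g y) has_vector_derivative 0) (at x)"
  proof (rule has_vector_derivative_transform_within_open[of "\<lambda>y. mat 1" _ _ "{0<..<1}"])
    show "((\<lambda>y. mat 1 :: complex^3^3) has_vector_derivative 0) (at x)" by simp
    show "open {0<..<1::real}" by simp
    show "x \<in> {0<..<1}" by (rule x)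
    show "mat 1 = adj (g y) ** g y" if "y \<in> {0<..<1}" for y
    proof -
      have "g y \<in> SU" using S that by auto
      then show ?thesis by (simp add: SU_inv)
    qed
  qed
  have "adj D ** g x + adj (g x) ** D = 0" using vector_derivative_unique_at[OF h h0] .
  then show ?thesis by (simp add: adj_mult)
qed

lemma ftc_bound:
  fixes G G' sp :: "real \<Rightarrow> real"
  assumes G: "continuous_on {0..1} G" and dG: "\<And>x. x \<in> {0<..<1} \<Longrightarrow> (G has_real_derivative G' x) (at x)"
    and b: "\<And>x. x \<in> {0<..<1} \<Longrightarrow> \<bar>G' x\<bar> \<le> sp x" and sp: "sp integrable_on {0..1}"
    and sp0: "\<And>x. x \<in> {0..1} \<Longrightarrow> 0 \<le> sp x"
  shows "\<bar>G 1 - G 0\<bar> \<le> integral {0..1} sp"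
proof -
  define G'' where "G'' x = (if x \<in> {0<..<1} then G' x else 0)" for x
  have "(G'' has_integral G 1 - G 0) {0..1}"
  proof (rule fundamental_theorem_of_calculus_interior)
    show "continuous_on {0..1} G" by (rule G)
    show "(G has_vector_derivative G'' x) (at x)" if "x \<in> {0<..<1}" for x
      using dG[OF that] that unfolding G''_def by (simp add: has_real_derivative_iff_has_vector_derivative)
  qed simp
  moreover have spi: "(sp has_integral integral {0..1} sp) {0..1}" using sp by (rule integrable_integral)
  ultimately have "G 1 - G 0 \<le> integral {0..1} sp"
    by (rule has_integral_le) (use b sp0 in \<open>force simp: G''_def\<close>)
  moreover have "- (G 1 - G 0) \<le> integral {0..1} sp"
    using has_integral_neg[OF \<open>(G'' has_integral G 1 - G 0) {0..1}\<close>] spi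
    by (rule has_integral_le) (use b sp0 in \<open>force simp: G''_def\<close>)
  ultimately show ?thesis by linarith
qed

lemma esch_nonneg: "0 \<le> t \<Longrightarrow> 0 \<le> esch_sqnorm t Y"
  unfolding esch_sqnorm_def by (intro sum_nonneg) auto

lemma deriv_acs:
  assumes "0 < w" "w < 1"
  shows "((\<lambda>y. arccos (sqrt y)) has_real_derivative (- 1 / (2 * sqrt (w * (1 - w))))) (at w)"
proof -
  have s1: "sqrt w < 1" "0 < sqrt w" using assms by auto
  have s2: "-1 < sqrt w" using s1(2) by linarith
  have d: "((\<lambda>y. arccos (sqrt y)) has_real_derivative (inverse (- sqrt (1 - (sqrt w)^2)) * (inverse (sqrt w) / 2))) (at w)"
    by (rule DERIV_chain2[OF DERIV_arccos DERIV_real_sqrt]) (use s1 s2 assms in auto)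
  have r: "sqrt (w * (1 - w)) = sqrt w * sqrt (1 - w)" by (rule real_sqrt_mult)
  have w2: "(sqrt w)^2 = w" using assms by simp
  have nz: "sqrt w \<noteq> 0" "sqrt (1 - w) \<noteq> 0" using assms by auto
  have "inverse (- sqrt (1 - (sqrt w)^2)) * (inverse (sqrt w) / 2) = - 1 / (2 * sqrt (w * (1 - w)))"
    unfolding r w2 using nz by (simp add: field_simps)
  then show ?thesis using d by (simp add: mult.commute)
qed

definition fdist :: "complex^3^3 \<Rightarrow> real" where "fdist A = sqrt 2 * arccos (cmod (A$3$3))"

lemma length_lower_eps:
  fixes g :: "real \<Rightarrow> complex^3^3" and e :: real
  assumes t: "0 < t" and C1: "g C1_differentiable_on {0..1}" and S: "\<forall>s\<in>{0..1}. g s \<in> SU"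
    and e: "0 < e"
  shows "\<bar>sqrt 2 * arccos (sqrt ((cmod (g 1 $ 3 $ 3) ^ 2 + e) / (1 + 2 * e))) -
          sqrt 2 * arccos (sqrt ((cmod (g 0 $ 3 $ 3) ^ 2 + e) / (1 + 2 * e)))\<bar> \<le> curve_length t g"
proof -
  obtain D where D: "\<forall>x\<in>{0..1}. (g has_vector_derivative D x) (at x)" and cD: "continuous_on {0..1} D"
    using C1 unfolding C1_differentiable_on_def by blast
  define sp where "sp x = sqrt (esch_sqnorm t (adj (g x) ** D x))" for x
  have cg: "continuous_on {0..1} g"
    using D by (intro continuous_on_vector_derivative) (auto intro: has_vector_derivative_at_within)
  have vd: "vector_derivative g (at x within {0..1}) = D x" if "x \<in> {0..1}" for x
    by (rule vector_derivative_within_closed_interval) (use D that in \<open>auto intro: has_vector_derivative_at_within\<close>)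
  have cl: "curve_length t g = integral {0..1} sp"
    unfolding curve_length_def sp_def by (rule integral_cong) (simp add: vd)
  have csp: "continuous_on {0..1} sp"
    unfolding sp_def esch_expand mm3 adj_nth
    by (intro continuous_intros cg cD)
  have spi: "sp integrable_on {0..1}" using csp by (rule integrable_continuous_interval)
  have sp0: "0 \<le> sp x" for x unfolding sp_def using esch_nonneg t by simp
  define q where "q x = cmod (g x $ 3 $ 3) ^ 2" for x
  have q01: "0 \<le> q x \<and> q x \<le> 1" if "x \<in> {0..1}" for x
  proof -
    have "g x \<in> SU" using S that by auto
    from SU3_entries(2)[OF this] have r: "cmod (g x $ 3 $ 1)^2 + cmod (g x $ 3 $ 2)^2 + cmod (g x $ 3 $ 3)^2 = 1" .
    have "q x \<le> 1" unfolding q_def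
      using r zero_le_power2[of "cmod (g x $ 3 $ 1)"] zero_le_power2[of "cmod (g x $ 3 $ 2)"] by linarith
    then show ?thesis unfolding q_def by simp
  qed
  have cq: "continuous_on {0..1} q" unfolding q_def by (intro continuous_intros cg)
  define q' where "q' x = 2 * Re (cnj (g x $3$3) * D x $3$3)" for x
  have dq: "(q has_real_derivative q' x) (at x)" if "x \<in> {0<..<1}" for x
  proof -
    have Dx: "(g has_vector_derivative D x) (at x)" using D that by auto
    have ph: "((\<lambda>y. g y $ 3 $ 3) has_vector_derivative D x $ 3 $ 3) (at x)"
      using nth_has_vector_derivative[OF nth_has_vector_derivative[OF Dx]] .
    have re: "((\<lambda>y. Re (g y $ 3 $ 3)) has_real_derivative Re (D x $ 3 $ 3)) (at x)"
      using bounded_linear.has_vector_derivative[OF bounded_linear_Re ph]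
      by (simp add: has_real_derivative_iff_has_vector_derivative)
    have im: "((\<lambda>y. Im (g y $ 3 $ 3)) has_real_derivative Im (D x $ 3 $ 3)) (at x)"
      using bounded_linear.has_vector_derivative[OF bounded_linear_Im ph]
      by (simp add: has_real_derivative_iff_has_vector_derivative)
    have qe: "q = (\<lambda>y. Re (g y $ 3 $ 3) * Re (g y $ 3 $ 3) + Im (g y $ 3 $ 3) * Im (g y $ 3 $ 3))"
      unfolding q_def by (rule ext, subst cmod_power2, simp add: power2_eq_square)
    show ?thesis unfolding qe q'_def
      by (rule DERIV_cong[OF DERIV_add[OF DERIV_mult[OF re re] DERIV_mult[OF im im]]]) (simp add: algebra_simps)
  qed
  have key: "(q' x)^2 \<le> 2 * q x * (1 - q x) * (sp x)^2" if "x \<in> {0<..<1}" for x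
  proof -
    have Dx: "(g has_vector_derivative D x) (at x)" using D that by auto
    have gS: "g x \<in> SU" using S that by auto
    have sk: "adj (adj (g x) ** D x) + adj (g x) ** D x = 0" by (rule skew[OF S Dx that])
    have gy: "g x ** (adj (g x) ** D x) = D x"
      using SU_D(1)[OF gS] by (simp add: matrix_mul_assoc)
    have E0: "0 \<le> esch_sqnorm t (adj (g x) ** D x)"
      unfolding esch_sqnorm_def using t by (intro sum_nonneg) auto
    show ?thesis using pt_ineq[OF gS sk, of t] t E0 gy unfolding q_def q'_def sp_def by simp
  qed
  define u where "u x = (q x + e) / (1 + 2 * e)" for x
  have u01: "0 < u x \<and> u x < 1" if "x \<in> {0..1}" for x
    using q01[OF that] e unfolding u_def by (auto simp: field_simps)
  define G where "G x = sqrt 2 * arccos (sqrt (u x))" for x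
  define G' where "G' x = sqrt 2 * (- 1 / (2 * sqrt (u x * (1 - u x)))) * (q' x / (1 + 2 * e))" for x
  have "\<bar>G 1 - G 0\<bar> \<le> integral {0..1} sp"
  proof (rule ftc_bound[OF _ _ _ spi sp0])
    show "continuous_on {0..1} G"
    proof -
      have cu: "continuous_on {0..1} u" unfolding u_def using e
        by (intro continuous_on_divide continuous_on_add cq continuous_on_const) auto
      have cs: "continuous_on {0..1} (\<lambda>x. sqrt (u x))" by (intro continuous_on_real_sqrt cu)
      have "continuous_on {0..1} (\<lambda>x. arccos (sqrt (u x)))"
      proof (rule continuous_on_arccos[OF cs], intro ballI conjI)
        fix x :: real assume "x \<in> {0..1}"
        then have "0 < u x" "u x < 1" using u01 by auto
        then show "-1 \<le> sqrt (u x)" "sqrt (u x) \<le> 1" by (auto intro: order_trans[of _ 0])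
      qed
      then show ?thesis unfolding G_def by (intro continuous_on_mult continuous_on_const)
    qed
    show "(G has_real_derivative G' x) (at x)" if x: "x \<in> {0<..<1}" for x
    proof -
      have xx: "x \<in> {0..1}" using x by auto
      have du: "(u has_real_derivative (q' x / (1 + 2 * e))) (at x)"
        unfolding u_def using dq[OF x] e by (auto intro!: derivative_eq_intros)
      have "((\<lambda>y. arccos (sqrt (u y))) has_real_derivative
          (- 1 / (2 * sqrt (u x * (1 - u x)))) * (q' x / (1 + 2 * e))) (at x)"
        by (rule DERIV_chain2[OF deriv_acs du]) (use u01[OF xx] in auto)
      then have "((\<lambda>y. sqrt 2 * arccos (sqrt (u y))) has_real_derivative
          sqrt 2 * ((- 1 / (2 * sqrt (u x * (1 - u x)))) * (q' x / (1 + 2 * e)))) (at x)"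
        by (rule DERIV_cmult)
      then show ?thesis unfolding G_def G'_def by (simp only: mult.assoc)
    qed
    show "\<bar>G' x\<bar> \<le> sp x" if x: "x \<in> {0<..<1}" for x
    proof -
      have xx: "x \<in> {0..1}" using x by auto
      define a where "a = u x * (1 - u x)"
      have a0: "0 < a" unfolding a_def using u01[OF xx] by auto
      have ne: "1 + 2 * e \<noteq> 0" using e by simp
      have u1: "1 - u x = (1 + e - q x) / (1 + 2 * e)" unfolding u_def using ne by (simp add: field_simps)
      have aq: "a * (1 + 2 * e)^2 = (q x + e) * (1 + e - q x)"
        unfolding a_def u1 unfolding u_def using ne by (simp add: power2_eq_square)
      have qq: "q x * (1 - q x) \<le> (q x + e) * (1 + e - q x)"
        using q01[OF xx] e by (simp add: algebra_simps)
      have abs: "\<bar>G' x\<bar> = sqrt 2 * \<bar>q' x\<bar> / (2 * sqrt a * (1 + 2 * e))"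
        unfolding G'_def a_def[symmetric] using e a0 by (simp add: abs_mult field_simps)
      have "sqrt 2 * \<bar>q' x\<bar> \<le> sp x * (2 * sqrt a * (1 + 2 * e))"
      proof (rule power2_le_imp_le)
        have "(sqrt 2 * \<bar>q' x\<bar>)^2 = 2 * (q' x)^2" by (simp add: power_mult_distrib)
        also have "\<dots> \<le> 2 * (2 * q x * (1 - q x) * (sp x)^2)" using key[OF x] by simp
        also have "\<dots> \<le> 4 * ((q x + e) * (1 + e - q x)) * (sp x)^2"
        proof -
          have "(q x * (1 - q x)) * (sp x)^2 \<le> ((q x + e) * (1 + e - q x)) * (sp x)^2"
            using qq by (rule mult_right_mono) simp
          then show ?thesis by simp
        qed
        also have "\<dots> = 4 * (a * (1 + 2 * e)^2) * (sp x)^2" unfolding aq ..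
        also have "\<dots> = (sp x * (2 * sqrt a * (1 + 2 * e)))^2"
          using a0 by (simp add: power_mult_distrib)
        finally show "(sqrt 2 * \<bar>q' x\<bar>)^2 \<le> (sp x * (2 * sqrt a * (1 + 2 * e)))^2" .
        show "0 \<le> sp x * (2 * sqrt a * (1 + 2 * e))" using sp0 a0 e by simp
      qed
      then show ?thesis unfolding abs using a0 e by (simp add: pos_divide_le_eq)
    qed
  qed
  then show ?thesis unfolding cl G_def u_def q_def .
qed

lemma acs_lim:
  assumes x: "0 \<le> x" "x \<le> 1"
  shows "((\<lambda>e. arccos (sqrt ((x + e) / (1 + 2 * e)))) \<longlongrightarrow> arccos (sqrt x)) (at_right 0)"
proof -
  have "((\<lambda>e::real. sqrt ((x + e) / (1 + 2 * e))) \<longlongrightarrow> sqrt ((x + 0) / (1 + 2 * 0))) (at_right 0)"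
    by (intro tendsto_intros) auto
  then have lim1: "((\<lambda>e::real. sqrt ((x + e) / (1 + 2 * e))) \<longlongrightarrow> sqrt x) (at_right 0)" by simp
  have ev: "\<forall>\<^sub>F e in at_right 0. sqrt ((x + e) / (1 + 2 * e)) \<in> {-1..1}"
    using eventually_at_right_less[of 0]
  proof (rule eventually_mono)
    fix e :: real assume e: "0 < e"
    have "0 \<le> (x + e) / (1 + 2 * e)" "(x + e) / (1 + 2 * e) \<le> 1" using e x by (auto simp: field_simps)
    then show "sqrt ((x + e) / (1 + 2 * e)) \<in> {-1..1}" by (auto intro: order_trans[of _ 0])
  qed
  show ?thesis
  proof (rule continuous_on_tendsto_compose[OF continuous_on_arccos' lim1 _ ev])
    have a: "0 \<le> sqrt x" "sqrt x \<le> 1" using x by auto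
    have "-1 \<le> sqrt x" using a(1) by linarith
    then show "sqrt x \<in> {-1..1}" using a(2) by (simp only: atLeastAtMost_iff)
  qed
qed

lemma length_lower:
  fixes g :: "real \<Rightarrow> complex^3^3"
  assumes t: "0 < t" and C1: "g C1_differentiable_on {0..1}" and S: "\<forall>s\<in>{0..1}. g s \<in> SU"
  shows "\<bar>fdist (g 1) - fdist (g 0)\<bar> \<le> curve_length t g"
proof -
  have q01: "0 \<le> cmod (g x $ 3 $ 3)^2 \<and> cmod (g x $ 3 $ 3)^2 \<le> 1" if "x \<in> {0..1}" for x
  proof -
    have "g x \<in> SU" using S that by auto
    from SU3_entries(2)[OF this] have r: "cmod (g x $ 3 $ 1)^2 + cmod (g x $ 3 $ 2)^2 + cmod (g x $ 3 $ 3)^2 = 1" .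
    have "cmod (g x $ 3 $ 3)^2 \<le> 1"
      using r zero_le_power2[of "cmod (g x $ 3 $ 1)"] zero_le_power2[of "cmod (g x $ 3 $ 2)"] by linarith
    then show ?thesis by simp
  qed
  define F where "F e = sqrt 2 * arccos (sqrt ((cmod (g 1 $ 3 $ 3) ^ 2 + e) / (1 + 2 * e))) -
          sqrt 2 * arccos (sqrt ((cmod (g 0 $ 3 $ 3) ^ 2 + e) / (1 + 2 * e)))" for e
  have "(F \<longlongrightarrow> sqrt 2 * arccos (sqrt (cmod (g 1 $ 3 $ 3) ^ 2)) - sqrt 2 * arccos (sqrt (cmod (g 0 $ 3 $ 3) ^ 2))) (at_right 0)"
    unfolding F_def using q01[of 1] q01[of 0]
    by (intro tendsto_intros acs_lim) auto
  then have "((\<lambda>e. \<bar>F e\<bar>) \<longlongrightarrow> \<bar>fdist (g 1) - fdist (g 0)\<bar>) (at_right 0)"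
    unfolding fdist_def by (intro tendsto_intros) simp
  moreover have "\<forall>\<^sub>F e in at_right 0. \<bar>F e\<bar> \<le> curve_length t g"
    using eventually_at_right_less[of 0]
    by (rule eventually_mono) (unfold F_def, rule length_lower_eps[OF t C1 S])
  ultimately show ?thesis by (rule tendsto_upperbound) simp
qed

definition rotd :: "real \<Rightarrow> real \<Rightarrow> complex^3^3" where
 "rotd d th = (\<chi> i j. if i = 1 then 0
    else if i = 2 then (if j = 1 then 0 else if j = 2 then of_real (- sin th * d) else of_real (- cos th * d))
    else (if j = 1 then 0 else if j = 2 then of_real (cos th * d) else of_real (- sin th * d)))"

lemma rotd_nth[simp]:
  "rotd d th $ 1 $ 1 = 0" "rotd d th $ 1 $ 2 = 0" "rotd d th $ 1 $ 3 = 0"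
  "rotd d th $ 2 $ 1 = 0" "rotd d th $ 2 $ 2 = of_real (- sin th * d)" "rotd d th $ 2 $ 3 = of_real (- cos th * d)"
  "rotd d th $ 3 $ 1 = 0" "rotd d th $ 3 $ 2 = of_real (cos th * d)" "rotd d th $ 3 $ 3 = of_real (- sin th * d)"
  by (simp_all add: rotd_def)

lemma rot_deriv: "((\<lambda>x. rot (a + x * d)) has_vector_derivative rotd d (a + x * d)) (at x)"
proof (rule vec_has_vector_derivative, rule vec_has_vector_derivative)
  fix i j :: 3
  have c: "((\<lambda>x. complex_of_real (cos (a + x * d))) has_vector_derivative complex_of_real (- sin (a + x * d) * d)) (at x)"
    by (rule has_vector_derivative_of_real) (auto intro!: derivative_eq_intros)
  have s: "((\<lambda>x. complex_of_real (sin (a + x * d))) has_vector_derivative complex_of_real (cos (a + x * d) * d)) (at x)"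
    by (rule has_vector_derivative_of_real) (auto intro!: derivative_eq_intros)
  have ms: "((\<lambda>x. - complex_of_real (sin (a + x * d))) has_vector_derivative complex_of_real (- cos (a + x * d) * d)) (at x)"
    using has_vector_derivative_minus[OF s] by simp
  show "((\<lambda>x. rot (a + x * d) $ i $ j) has_vector_derivative rotd d (a + x * d) $ i $ j) (at x)"
    using exhaust_3[of i] exhaust_3[of j] c s ms by auto
qed

lemma C1_cos2: "(\<lambda>x. complex_of_real (cos (a + x * d))) C1_differentiable_on S"
  by (rule C1_real[where f'="\<lambda>x. - sin (a + x * d) * d"]) (auto intro!: derivative_eq_intros continuous_intros)

lemma C1_sin2: "(\<lambda>x. complex_of_real (sin (a + x * d))) C1_differentiable_on S"
  by (rule C1_real[where f'="\<lambda>x. cos (a + x * d) * d"]) (auto intro!: derivative_eq_intros continuous_intros)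

lemma curve_length_nonneg: "0 \<le> t \<Longrightarrow> 0 \<le> curve_length t g"
  unfolding curve_length_def
  by (cases "(\<lambda>s. sqrt (esch_sqnorm t (adj (g s) ** vector_derivative g (at s within {0..1})))) integrable_on {0..1}")
     (auto intro!: integral_nonneg simp: esch_nonneg not_integrable_integral)

lemma rot_curve: assumes t: "0 < t"
  shows "su3_dist t (rot a) (rot b) \<le> sqrt 2 * \<bar>b - a\<bar>"
proof -
  define d where "d = b - a"
  define g where "g x = rot (a + x * d)" for x
  have dg: "(g has_vector_derivative rotd d (a + x * d)) (at x)" for x unfolding g_def by (rule rot_deriv)
  have C1: "g C1_differentiable_on {0..1}" unfolding g_def by (rule C1_mat3) (simp_all add: C1_cos2 C1_sin2)
  have "curve_length t g = integral {0..1} (\<lambda>x::real. sqrt 2 * \<bar>d\<bar>)"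
    unfolding curve_length_def
  proof (rule Henstock_Kurzweil_Integration.integral_cong)
    fix x :: real assume x: "x \<in> {0..1}"
    have vd: "vector_derivative g (at x within {0..1}) = rotd d (a + x * d)"
      by (rule vector_derivative_within_closed_interval) (use dg x in \<open>auto intro: has_vector_derivative_at_within\<close>)
    have cs: "d * (cos (a + d * x) * cos (a + d * x)) + d * (sin (a + d * x) * sin (a + d * x)) = d"
    proof -
      have "cos (a + d * x) * cos (a + d * x) + sin (a + d * x) * sin (a + d * x) = 1"
        by (metis sin_cos_squared_add3 add.commute)
      then show ?thesis by (metis distrib_left mult_1_right)
    qed
    have "esch_sqnorm t (adj (g x) ** rotd d (a + x * d)) = 2 * d^2"
    proof -
      have e1: "(adj (g x) ** rotd d (a + x * d)) $ 2 $ 3 = - of_real d"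
        unfolding g_def mm3 using cs by (simp flip: of_real_mult of_real_add of_real_minus add: algebra_simps)
      have e2: "(adj (g x) ** rotd d (a + x * d)) $ 3 $ 2 = of_real d"
        unfolding g_def mm3 using cs by (simp flip: of_real_mult of_real_add of_real_minus add: algebra_simps)
      have e0: "(adj (g x) ** rotd d (a + x * d)) $ 1 $ 1 = 0" "(adj (g x) ** rotd d (a + x * d)) $ 1 $ 2 = 0"
        "(adj (g x) ** rotd d (a + x * d)) $ 1 $ 3 = 0" "(adj (g x) ** rotd d (a + x * d)) $ 2 $ 1 = 0"
        "(adj (g x) ** rotd d (a + x * d)) $ 3 $ 1 = 0"
        "(adj (g x) ** rotd d (a + x * d)) $ 2 $ 2 = 0" "(adj (g x) ** rotd d (a + x * d)) $ 3 $ 3 = 0"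
        unfolding g_def mm3 by (simp_all flip: of_real_mult of_real_add of_real_minus add: algebra_simps)
      show ?thesis unfolding esch_expand e0 e1 e2 by simp
    qed
    then show "sqrt (esch_sqnorm t (adj (g x) ** vector_derivative g (at x within {0..1}))) = sqrt 2 * \<bar>d\<bar>"
      unfolding vd by (simp add: real_sqrt_mult)
  qed
  also have "\<dots> = sqrt 2 * \<bar>d\<bar>" by simp
  finally have cl: "curve_length t g = sqrt 2 * \<bar>b - a\<bar>" unfolding d_def .
  have mem: "curve_length t g \<in> {curve_length t \<gamma> | \<gamma>. \<gamma> C1_differentiable_on {0..1} \<and>
      (\<forall>s\<in>{0..1}. \<gamma> s \<in> SU) \<and> \<gamma> 0 = rot a \<and> \<gamma> 1 = rot b}"
    using C1 rot_SU unfolding g_def d_def by auto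
  have bdd: "bdd_below {curve_length t \<gamma> | \<gamma>. \<gamma> C1_differentiable_on {0..1} \<and>
      (\<forall>s\<in>{0..1}. \<gamma> s \<in> SU) \<and> \<gamma> 0 = rot a \<and> \<gamma> 1 = rot b}"
    using curve_length_nonneg t by (intro bdd_belowI[of _ 0]) auto
  show ?thesis unfolding su3_dist_def cl[symmetric] by (rule cInf_lower[OF mem bdd])
qed

lemma fdist_circ: "z \<in> S1 \<Longrightarrow> fdist (circ_act (a_p p) (b_p p) z B) = fdist B"
  unfolding fdist_def by (simp add: circ_nth norm_mult cfac33)

lemma fdist_Gact: "fdist (Gact g A) = fdist A"
  unfolding fdist_def by (simp add: Gact33)

lemma one_S1: "1 \<in> S1" by (simp add: S1_def)

lemma su3_dist_ge: assumes t: "0 < t" and A: "A \<in> SU" and B: "B \<in> SU"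
  shows "\<bar>fdist B - fdist A\<bar> \<le> su3_dist t A B"
  unfolding su3_dist_def
proof (rule cInf_greatest)
  show "{curve_length t \<gamma> |\<gamma>. \<gamma> C1_differentiable_on {0..1} \<and> (\<forall>s\<in>{0..1}. \<gamma> s \<in> SU) \<and> \<gamma> 0 = A \<and> \<gamma> 1 = B} \<noteq> {}"
    using path_exists[OF A B] by auto
next
  fix l assume "l \<in> {curve_length t \<gamma> |\<gamma>. \<gamma> C1_differentiable_on {0..1} \<and> (\<forall>s\<in>{0..1}. \<gamma> s \<in> SU) \<and> \<gamma> 0 = A \<and> \<gamma> 1 = B}"
  then obtain g where g: "l = curve_length t g" "g C1_differentiable_on {0..1}" "\<forall>s\<in>{0..1}. g s \<in> SU" "g 0 = A" "g 1 = B"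
    by blast
  show "\<bar>fdist B - fdist A\<bar> \<le> l" using length_lower[OF t g(2) g(3)] g by simp
qed

lemma esch_dist_ge: assumes t: "0 < t" and A: "A \<in> SU" and B: "B \<in> SU"
  shows "\<bar>fdist B - fdist A\<bar> \<le> esch_dist (a_p p) (b_p p) t A B"
  unfolding esch_dist_def
proof (rule cInf_greatest)
  show "{su3_dist t A (circ_act (a_p p) (b_p p) z B) |z. z \<in> S1} \<noteq> {}" using one_S1 by auto
next
  fix l assume "l \<in> {su3_dist t A (circ_act (a_p p) (b_p p) z B) |z. z \<in> S1}"
  then obtain z where z: "z \<in> S1" "l = su3_dist t A (circ_act (a_p p) (b_p p) z B)" by blast
  show "\<bar>fdist B - fdist A\<bar> \<le> l"
    using su3_dist_ge[OF t A circ_SU[OF z(1) B]] z fdist_circ[OF z(1)] by simp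
qed

lemma esch_dist_le: assumes t: "0 < t" and A: "A \<in> SU" and B: "B \<in> SU"
  shows "esch_dist (a_p p) (b_p p) t A B \<le> su3_dist t A B"
  unfolding esch_dist_def
proof (rule cInf_lower)
  show "su3_dist t A B \<in> {su3_dist t A (circ_act (a_p p) (b_p p) z B) |z. z \<in> S1}"
    using one_S1 circ_one[of p B] by (metis (mono_tags, lifting) mem_Collect_eq)
  show "bdd_below {su3_dist t A (circ_act (a_p p) (b_p p) z B) |z. z \<in> S1}"
  proof (rule bdd_belowI[of _ 0])
    fix l assume "l \<in> {su3_dist t A (circ_act (a_p p) (b_p p) z B) |z. z \<in> S1}"
    then obtain z where z: "z \<in> S1" "l = su3_dist t A (circ_act (a_p p) (b_p p) z B)" by blast
    show "0 \<le> l" using order_trans[OF abs_ge_zero su3_dist_ge[OF t A circ_SU[OF z(1) B]]] z by simp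
  qed
qed

lemma fdist_rot: assumes "0 \<le> th" "th \<le> pi/2" shows "fdist (rot th) = sqrt 2 * th"
proof -
  have "0 \<le> cos th" using assms by (intro cos_ge_zero) auto
  then show ?thesis unfolding fdist_def using assms by (simp add: arccos_cos)
qed

theorem proposition2p1:
  fixes p :: nat and t :: real
  assumes "p > 0" and "0 < t" and "t < 1"
  shows "\<exists>(c :: real \<Rightarrow> complex^3^3) L. L > 0 \<and>
     (\<forall>s\<in>{0..L}. c s \<in> SU) \<and>
     (\<forall>A\<in>SU. \<exists>s\<in>{0..L}. same_Gorbit (a_p p) (b_p p) (c s) A) \<and>
     (\<forall>s\<in>{0..L}. \<forall>s'\<in>{0..L}. same_Gorbit (a_p p) (b_p p) (c s) (c s') \<longrightarrow> s = s') \<and>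
     (\<forall>s\<in>{0..L}. \<forall>s'\<in>{0..L}. esch_dist (a_p p) (b_p p) t (c s) (c s') = \<bar>s - s'\<bar>) \<and>
     (\<forall>g\<in>SU \<times> SU. \<forall>g'\<in>SU \<times> SU.
        L \<le> esch_dist (a_p p) (b_p p) t (Gact g (c 0)) (Gact g' (c L))) \<and>
     isotropy (a_p p) (b_p p) (c 0) = Kminus_p p \<and>
     isotropy (a_p p) (b_p p) (c L) = Kplus_p p \<and>
     (\<forall>s\<in>{0<..<L}. isotropy (a_p p) (b_p p) (c s) = H_p p)"
proof -
  have t: "0 < t" by (rule assms(2))
  define c where "c s = rot (s / sqrt 2)" for s
  define L where "L = pi / sqrt 2"
  have L0: "L > 0" unfolding L_def by simp
  have s22: "sqrt 2 * sqrt 2 = (2::real)" by simp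
  have Ls: "L = sqrt 2 * (pi / 2)" unfolding L_def
    by (simp add: field_simps)
  have sq0: "sqrt 2 > (0::real)" by simp
  have cL: "c L = rot (pi/2)" unfolding c_def L_def by (simp add: field_simps)
  have c0: "c 0 = mat 1" unfolding c_def by (simp add: rot0)
  have th: "0 \<le> s / sqrt 2 \<and> s / sqrt 2 \<le> pi/2" if "s \<in> {0..L}" for s
    using that sq0 unfolding Ls by (auto simp: pos_divide_le_eq mult.commute)
  have fc: "fdist (c s) = s" if "s \<in> {0..L}" for s
    unfolding c_def using fdist_rot[of "s / sqrt 2"] th[OF that] by simp
  have cS: "c s \<in> SU" for s unfolding c_def by (rule rot_SU)
  have P1: "\<forall>s\<in>{0..L}. c s \<in> SU" using cS by auto
  have P2: "\<forall>A\<in>SU. \<exists>s\<in>{0..L}. same_Gorbit (a_p p) (b_p p) (c s) A"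
  proof
    fix A :: "complex^3^3" assume A: "A \<in> SU"
    obtain z g1 g2 th where z: "z \<in> S1" "g1 \<in> SU" "g2 \<in> SU" "th \<in> {0..pi/2}"
      and Ae: "A = circ_act (a_p p) (b_p p) z (Gact (g1,g2) (rot th))"
      using coverage[OF A, of p] by blast
    have s: "sqrt 2 * th \<in> {0..L}" using z(4) sq0 unfolding Ls by auto
    have "c (sqrt 2 * th) = rot th" unfolding c_def by simp
    then have "same_Gorbit (a_p p) (b_p p) (c (sqrt 2 * th)) A"
      unfolding same_Gorbit_def using z Ae by auto
    then show "\<exists>s\<in>{0..L}. same_Gorbit (a_p p) (b_p p) (c s) A" using s by blast
  qed
  have P3: "\<forall>s\<in>{0..L}. \<forall>s'\<in>{0..L}. same_Gorbit (a_p p) (b_p p) (c s) (c s') \<longrightarrow> s = s'"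
  proof (intro ballI impI)
    fix s s' assume s: "s \<in> {0..L}" and s': "s' \<in> {0..L}" and o: "same_Gorbit (a_p p) (b_p p) (c s) (c s')"
    have "fdist (c s') = fdist (c s)" using same_orbit33[OF o] unfolding fdist_def by simp
    then show "s = s'" using fc[OF s] fc[OF s'] by simp
  qed
  have P4: "\<forall>s\<in>{0..L}. \<forall>s'\<in>{0..L}. esch_dist (a_p p) (b_p p) t (c s) (c s') = \<bar>s - s'\<bar>"
  proof (intro ballI)
    fix s s' assume s: "s \<in> {0..L}" and s': "s' \<in> {0..L}"
    have ge: "\<bar>s' - s\<bar> \<le> esch_dist (a_p p) (b_p p) t (c s) (c s')"
      using esch_dist_ge[OF t cS[of s] cS[of s'], of p] fc[OF s] fc[OF s'] by simp
    have "esch_dist (a_p p) (b_p p) t (c s) (c s') \<le> su3_dist t (c s) (c s')"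
      by (rule esch_dist_le[OF t cS cS])
    also have "\<dots> \<le> sqrt 2 * \<bar>s' / sqrt 2 - s / sqrt 2\<bar>" unfolding c_def by (rule rot_curve[OF t])
    also have "\<dots> = sqrt 2 * (\<bar>s' - s\<bar> / sqrt 2)"
      by (simp only: diff_divide_distrib[symmetric] abs_divide real_sqrt_abs2 abs_of_pos[OF sq0])
    also have "\<dots> = \<bar>s' - s\<bar>" using sq0 by simp
    finally show "esch_dist (a_p p) (b_p p) t (c s) (c s') = \<bar>s - s'\<bar>" using ge by simp
  qed
  have P5: "\<forall>g\<in>SU \<times> SU. \<forall>g'\<in>SU \<times> SU. L \<le> esch_dist (a_p p) (b_p p) t (Gact g (c 0)) (Gact g' (c L))"
  proof (intro ballI)
    fix g g' :: "(complex^2^2) \<times> (complex^2^2)" assume g: "g \<in> SU \<times> SU" and g': "g' \<in> SU \<times> SU"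
    have "\<bar>fdist (Gact g' (c L)) - fdist (Gact g (c 0))\<bar> = L"
      unfolding fdist_Gact using fc[of L] fc[of 0] L0 by simp
    then show "L \<le> esch_dist (a_p p) (b_p p) t (Gact g (c 0)) (Gact g' (c L))"
      using esch_dist_ge[OF t Gact_SU[OF g cS[of 0]] Gact_SU[OF g' cS[of L]], of p] by simp
  qed
  have P6: "isotropy (a_p p) (b_p p) (c 0) = Kminus_p p" unfolding c0 by (rule iso_Kminus)
  have P7: "isotropy (a_p p) (b_p p) (c L) = Kplus_p p" unfolding cL by (rule iso_Kplus)
  have P8: "\<forall>s\<in>{0<..<L}. isotropy (a_p p) (b_p p) (c s) = H_p p"
  proof
    fix s assume s: "s \<in> {0<..<L}"
    have "0 < s / sqrt 2" "s / sqrt 2 < pi / 2" using s sq0 unfolding Ls by (auto simp: pos_divide_less_eq mult.commute)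
    then show "isotropy (a_p p) (b_p p) (c s) = H_p p" unfolding c_def by (rule iso_H)
  qed
  show ?thesis using L0 P1 P2 P3 P4 P5 P6 P7 P8 by blast
qed

end
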